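(* Let $\boldsymbol{\lambda}=(\lambda_k)_{k\in\mathbb{N}_0}$ be a sequence of positive reals with $0\le\lambda_0<1$ and $\sum_{k=0}^{\infty}\lambda_k^2=1$, and let $\beta:=\sup\{\lambda_0^2,\ \lambda_k^2/2 : k\in\mathbb{N}\}$. Then $\beta\in(0,1)$, and for every $d\in\mathbb{N}$ and $n\in\mathbb{N}_0$, while the initial error of $\mathrm{App}:\mathcal{H}_{\boldsymbol{\lambda}}(\mathbb{T}^d)\hookrightarrow L_\infty(\mathbb{T}^d)$ equals $1$, \[ e^{\mathrm{det}}\bigl(n,\mathcal{H}_{\boldsymbol{\lambda}}(\mathbb{T}^d)\hookrightarrow L_\infty(\mathbb{T}^d)\bigr)\ge\sqrt{(1-n\,\beta^d)_+}. \] Consequently, for every $\varepsilon\in(0,1)$, \[ n^{\mathrm{det}}\bigl(\varepsilon,\mathcal{H}_{\boldsymbol{\lambda}}(\mathbb{T}^d)\hookrightarrow L_\infty(\mathbb{T}^d)\bigr)\ge\beta^{-d}(1-\varepsilon)^2, \] so the problem suffers from the curse of dimensionality in the deterministic setting. In particular this holds for the Korobov spaces $\mathcal{H}^{\mathrm{Kor}}_r(\mathbb{T}^d)$ (with $r>1/2$, $\beta_0,\beta_1>0$, $\beta_0+\beta_1\zeta(2r)=1$) with $\beta=\sup\{\beta_0,\beta_1/2\}$.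
   Context: $\mathbb{T}=[0,1)$ is the one-dimensional torus (endpoints identified), $\mathbb{T}^d$ the $d$-torus with Lebesgue measure. For $\boldsymbol{\lambda}=(\lambda_k)_{k\in\mathbb{N}_0}\subset(0,\infty)$, $\mathcal{H}_{\boldsymbol{\lambda}}(\mathbb{T})$ is the real Hilbert space of functions on $\mathbb{T}$ having the orthonormal basis $\psi_0:=\lambda_0$, $\psi_{-k}:=\lambda_k\sin(2\pi k\,\cdot)$, $\psi_k:=\lambda_k\cos(2\pi k\,\cdot)$, $k\in\mathbb{N}$. $\mathcal{H}_{\boldsymbol{\lambda}}(\mathbb{T}^d)$ is the (unweighted) tensor product space with orthonormal basis $\psi_{\mathbf{k}}(\mathbf{x})=\prod_{j=1}^d\psi_{k_j}(x_j)$, $\mathbf{k}\in\mathbb{Z}^d$; its reproducing kernel is $K(\mathbf{x},\mathbf{y})=\prod_{j=1}^d\sum_{k=0}^\infty\lambda_k^2\cos(2\pi k(x_j-y_j))$. The Korobov space $\mathcal{H}^{\mathrm{Kor}}_r(\mathbb{T}^d)$ is $\mathcal{H}_{\boldsymbol{\lambda}}(\mathbb{T}^d)$ with $\lambda_0=\sqrt{\beta_0}$, $\lambda_k=\sqrt{\beta_1}\,k^{-r}$ ($k\in\mathbb{N}$); $\zeta$ is the Riemann zeta function. $a_+:=\max\{a,0\}$. Deterministic setting with linear information: a method is $A_n=\phi\circ N$ with $N(f)=(L_1(f),\ldots,L_n(f))$ for continuous linear functionals $L_i$ on the input space and arbitrary $\phi:\mathbb{R}^n\to L_\infty(\mathbb{T}^d)$;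 its error is $\sup_{\|f\|\le1}\|f-A_n(f)\|_{L_\infty}$; $e^{\mathrm{det}}(n,\cdot)$ is the infimum of this error over all such methods, and $n^{\mathrm{det}}(\varepsilon,\cdot)$ is the minimal $n\in\mathbb{N}_0$ for which some such method has error at most $\varepsilon$. The initial error is the operator norm of the embedding. *)

theory Defs
  imports "HOL-Analysis.Analysis" "HOL-Probability.Essential_Supremum"
begin

definition psi1 :: "(nat \<Rightarrow> real) \<Rightarrow> int \<Rightarrow> real \<Rightarrow> real" where
  "psi1 lam k x =
     (if k = 0 then lam 0
      else if k < 0 then lam (nat (-k)) * sin (2 * pi * real_of_int (-k) * x)
      else lam (nat k) * cos (2 * pi * real_of_int k * x))"

text \<open>Tensor product basis psi_k(x) = prod_j psi_{k_j}(x_j), k in Z^d; d = CARD('d).\<close>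
definition psi :: "(nat \<Rightarrow> real) \<Rightarrow> int^'d \<Rightarrow> real^'d \<Rightarrow> real" where
  "psi lam k x = (\<Prod>j\<in>UNIV. psi1 lam (k $ j) (x $ j))"

text \<open>The torus T^d = [0,1)^d (as a fundamental domain) with Lebesgue measure.\<close>
definition torus :: "(real^'d) set" where
  "torus = {x. \<forall>j. 0 \<le> x $ j \<and> x $ j < 1}"

definition Tmeas :: "(real^'d) measure" where
  "Tmeas = lebesgue_on torus"

definition series :: "(nat \<Rightarrow> real) \<Rightarrow> (int^'d \<Rightarrow> real) \<Rightarrow> real^'d \<Rightarrow> real" where
  "series lam c = (\<lambda>x. \<Sum>\<^sub>\<infinity>k. c k * psi lam k x)"

definition l2coeff :: "(int^'d \<Rightarrow> real) \<Rightarrow> bool" where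
  "l2coeff c \<longleftrightarrow> (\<lambda>k. (c k)\<^sup>2) summable_on UNIV"

definition Hspace :: "(nat \<Rightarrow> real) \<Rightarrow> (real^'d \<Rightarrow> real) set" where
  "Hspace lam = {f. \<exists>c. l2coeff c \<and> f = series lam c}"

definition Hnorm :: "(nat \<Rightarrow> real) \<Rightarrow> (real^'d \<Rightarrow> real) \<Rightarrow> real" where
  "Hnorm lam f = Inf {sqrt (\<Sum>\<^sub>\<infinity>k. (c k)\<^sup>2) | c. l2coeff c \<and> f = series lam c}"

definition Hball :: "(nat \<Rightarrow> real) \<Rightarrow> (real^'d \<Rightarrow> real) set" where
  "Hball lam = {f \<in> Hspace lam. Hnorm lam f \<le> 1}"

definition clf :: "(nat \<Rightarrow> real) \<Rightarrow> ((real^'d \<Rightarrow> real) \<Rightarrow> real) \<Rightarrow> bool" where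
  "clf lam L \<longleftrightarrow>
     (\<forall>f\<in>Hspace lam. \<forall>g\<in>Hspace lam. \<forall>a b.
         L (\<lambda>x. a * f x + b * g x) = a * L f + b * L g) \<and>
     (\<exists>C. \<forall>f\<in>Hspace lam. \<bar>L f\<bar> \<le> C * Hnorm lam f)"

definition Linf_norm :: "(real^'d \<Rightarrow> real) \<Rightarrow> ereal" where
  "Linf_norm f = esssup Tmeas (\<lambda>x. ereal \<bar>f x\<bar>)"

text \<open>Admissible deterministic methods A_n = phi o N with linear information
  N(f) = (L_0 f, ..., L_{n-1} f), phi mapping into L_infinity(T^d).\<close>
definition admissible ::
  "(nat \<Rightarrow> real) \<Rightarrow> nat \<Rightarrow> (nat \<Rightarrow> (real^'d \<Rightarrow> real) \<Rightarrow> real) \<Rightarrow> (real list \<Rightarrow> real^'d \<Rightarrow> real) \<Rightarrow> bool"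
  where
  "admissible lam n L phi \<longleftrightarrow>
     (\<forall>i<n. clf lam (L i)) \<and>
     (\<forall>y. length y = n \<longrightarrow> phi y \<in> borel_measurable Tmeas \<and> Linf_norm (phi y) < \<infinity>)"

definition method_error ::
  "(nat \<Rightarrow> real) \<Rightarrow> nat \<Rightarrow> (nat \<Rightarrow> (real^'d \<Rightarrow> real) \<Rightarrow> real) \<Rightarrow> (real list \<Rightarrow> real^'d \<Rightarrow> real) \<Rightarrow> ereal"
  where
  "method_error lam n L phi =
     (SUP f\<in>Hball lam. Linf_norm (\<lambda>x. f x - phi (map (\<lambda>i. L i f) [0..<n]) x))"

definition e_det :: "'d::finite itself \<Rightarrow> (nat \<Rightarrow> real) \<Rightarrow> nat \<Rightarrow> ereal" where
  "e_det _ lam n =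
     (INF Lphi\<in>{(L :: nat \<Rightarrow> (real^'d \<Rightarrow> real) \<Rightarrow> real, phi). admissible lam n L phi}.
        method_error lam n (fst Lphi) (snd Lphi))"

definition n_det :: "'d::finite itself \<Rightarrow> (nat \<Rightarrow> real) \<Rightarrow> real \<Rightarrow> enat" where
  "n_det _ lam eps =
     (INF n\<in>{n. \<exists>(L :: nat \<Rightarrow> (real^'d \<Rightarrow> real) \<Rightarrow> real) phi.
                 admissible lam n L phi \<and> method_error lam n L phi \<le> ereal eps}. enat n)"

definition initial_error :: "'d::finite itself \<Rightarrow> (nat \<Rightarrow> real) \<Rightarrow> ereal" where
  "initial_error _ lam = (SUP f\<in>(Hball lam :: (real^'d \<Rightarrow> real) set). Linf_norm f)"

definition beta :: "(nat \<Rightarrow> real) \<Rightarrow> real" where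
  "beta lam = Sup (insert ((lam 0)\<^sup>2) {(lam k)\<^sup>2 / 2 | k. k \<ge> 1})"

definition kor_lambda :: "real \<Rightarrow> real \<Rightarrow> real \<Rightarrow> nat \<Rightarrow> real" where
  "kor_lambda r b0 b1 k = (if k = 0 then sqrt b0 else sqrt b1 * real k powr (-r))"

definition det_lower_bounds :: "'d::finite itself \<Rightarrow> (nat \<Rightarrow> real) \<Rightarrow> real \<Rightarrow> bool" where
  "det_lower_bounds T lam b \<longleftrightarrow>
     initial_error T lam = 1 \<and>
     (\<forall>n. ereal (sqrt (max 0 (1 - real n * b ^ CARD('d)))) \<le> e_det T lam n) \<and>
     (\<forall>eps. 0 < eps \<and> eps < 1 \<longrightarrow>
        ereal (inverse (b ^ CARD('d)) * (1 - eps)\<^sup>2) \<le> ereal_of_enat (n_det T lam eps))"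

end

theory Submission
  imports Defs
begin


lemma trig_sums0:
  fixes M :: nat and j :: int
  assumes M: "M > 0" and nd: "\<not> (int M dvd j)"
  shows "(\<Sum>m<M. cos (real m * (2*pi * of_int j/real M))) = 0 \<and>
         (\<Sum>m<M. sin (real m * (2*pi * of_int j/real M))) = 0"
proof -
  define h where "h = 2*pi * of_int j/real M"
  have z1: "cis h \<noteq> 1"
  proof
    assume "cis h = 1"
    then have "cos h = 1" by (metis Re_complex_of_real cis.sel(1) one_complex.sel(1))
    then obtain x :: int where "h = real_of_int x * 2 * pi" using cos_one_2pi_int by blast
    then have "of_int j = real_of_int x * real M" using M unfolding h_def
      by (simp add: field_simps)
    then have "j = x * int M" by (metis of_int_eq_iff of_int_mult of_int_of_nat_eq)
    then show False using nd by simp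
  qed
  have zM: "cis h ^ M = 1"
  proof -
    have "real M * h = 2 * pi * of_int j" using M unfolding h_def by simp
    then have "cis h ^ M = cis (2 * pi * of_int j)" by (metis Complex.DeMoivre)
    also have "\<dots> = 1" by (rule cis_multiple_2pi) simp
    finally show ?thesis .
  qed
  have "(\<Sum>m<M. cis (real m * h)) = (\<Sum>m<M. cis h ^ m)" by (simp add: Complex.DeMoivre)
  also have "\<dots> = 0" using z1 zM by (simp add: sum_gp_strict)
  finally have S: "(\<Sum>m<M. cis (real m * h)) = 0" .
  have "Re (\<Sum>m<M. cis (real m * h)) = (\<Sum>m<M. cos (real m * h))" by simp
  moreover have "Im (\<Sum>m<M. cis (real m * h)) = (\<Sum>m<M. sin (real m * h))" by simp
  ultimately have "(\<Sum>m<M. cos (real m * h)) = 0 \<and> (\<Sum>m<M. sin (real m * h)) = 0"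
    using S by simp
  then show ?thesis unfolding h_def .
qed

definition ang :: "nat \<Rightarrow> int \<Rightarrow> nat \<Rightarrow> real" where
  "ang M p m = 2 * pi * real_of_int p * (real m / real M)"

lemma ang_add: "ang M p m + ang M q m = ang M (p + q) m"
  by (simp add: ang_def algebra_simps)
lemma ang_diff: "ang M p m - ang M q m = ang M (p - q) m"
  by (simp add: ang_def algebra_simps)

lemma Csum:
  assumes M: "M > 0" and j: "\<bar>j\<bar> < int M"
  shows "(\<Sum>m<M. cos (ang M j m)) = (if j = 0 then real M else 0)"
proof (cases "j = 0")
  case True then show ?thesis by (simp add: ang_def)
next
  case False
  have "\<not> int M dvd j"
  proof
    assume "int M dvd j"
    then have "int M \<le> \<bar>j\<bar>" using dvd_imp_le_int[OF False] by fastforce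
    then show False using j by simp
  qed
  from trig_sums0[OF M this] have "(\<Sum>m<M. cos (real m * (2*pi * of_int j/real M))) = 0" by blast
  moreover have "\<And>m. ang M j m = real m * (2*pi * of_int j/real M)" by (simp add: ang_def)
  ultimately show ?thesis using False by simp
qed

lemma Ssum:
  assumes M: "M > 0" and j: "\<bar>j\<bar> < int M"
  shows "(\<Sum>m<M. sin (ang M j m)) = 0"
proof (cases "j = 0")
  case True then show ?thesis by (simp add: ang_def)
next
  case False
  have "\<not> int M dvd j"
  proof
    assume "int M dvd j"
    then have "int M \<le> \<bar>j\<bar>" using dvd_imp_le_int[OF False] by fastforce
    then show False using j by simp
  qed
  from trig_sums0[OF M this] have "(\<Sum>m<M. sin (real m * (2*pi * of_int j/real M))) = 0" by blast
  moreover have "\<And>m. ang M j m = real m * (2*pi * of_int j/real M)" by (simp add: ang_def)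
  ultimately show ?thesis by simp
qed

lemma cc_sum:
  "(\<Sum>m<M. cos (ang M p m) * cos (ang M q m)) =
     ((\<Sum>m<M. cos (ang M (p - q) m)) + (\<Sum>m<M. cos (ang M (p + q) m))) / 2"
  unfolding cos_times_cos ang_add ang_diff by (simp add: sum.distrib flip: sum_divide_distrib)
lemma ss_sum:
  "(\<Sum>m<M. sin (ang M p m) * sin (ang M q m)) =
     ((\<Sum>m<M. cos (ang M (p - q) m)) - (\<Sum>m<M. cos (ang M (p + q) m))) / 2"
  unfolding sin_times_sin ang_add ang_diff by (simp add: sum_subtractf flip: sum_divide_distrib)
lemma sc_sum:
  "(\<Sum>m<M. sin (ang M p m) * cos (ang M q m)) =
     ((\<Sum>m<M. sin (ang M (p + q) m)) + (\<Sum>m<M. sin (ang M (p - q) m))) / 2"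
  unfolding sin_times_cos ang_add ang_diff by (simp add: sum.distrib flip: sum_divide_distrib)
lemma cs_sum:
  "(\<Sum>m<M. cos (ang M p m) * sin (ang M q m)) =
     ((\<Sum>m<M. sin (ang M (p + q) m)) - (\<Sum>m<M. sin (ang M (p - q) m))) / 2"
  unfolding cos_times_sin ang_add ang_diff by (simp add: sum_subtractf flip: sum_divide_distrib)

definition w1 :: "(nat \<Rightarrow> real) \<Rightarrow> int \<Rightarrow> real" where
  "w1 lam k = (if k = 0 then (lam 0)\<^sup>2 else (lam (nat \<bar>k\<bar>))\<^sup>2 / 2)"

lemma psi1_ang:
  "psi1 lam k (real m / real M) =
    (if k = 0 then lam 0 else if k < 0 then lam (nat (-k)) * sin (ang M (-k) m)
     else lam (nat k) * cos (ang M k m))"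
  by (simp add: psi1_def ang_def)

lemma sum_cmul2a: "(\<Sum>m<M. ((a::real) * f m) * (b * g m)) = a * b * (\<Sum>m<M. f m * g m)"
  by (simp add: sum_distrib_left mult_ac)
lemma sum_cmul2b: "(\<Sum>m<M. (a::real) * (b * g m)) = a * b * (\<Sum>m<M. g m)"
  by (simp add: sum_distrib_left mult_ac)
lemma sum_cmul2c: "(\<Sum>m<M. ((a::real) * f m) * b) = a * b * (\<Sum>m<M. f m)"
  by (simp add: sum_distrib_left sum_distrib_right mult_ac)
lemmas sum_cmul2 = sum_cmul2a sum_cmul2b sum_cmul2c

lemma orth1:
  assumes MN: "M = 2*N+1" and k: "\<bar>k\<bar> \<le> int N" and k': "\<bar>k'\<bar> \<le> int N"
  shows "(\<Sum>m<M. psi1 lam k (real m / real M) * psi1 lam k' (real m / real M)) =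
         (if k = k' then real M * w1 lam k else 0)"
proof -
  have M: "M > 0" using MN by simp
  have bd: "\<And>p q. \<bar>p\<bar> \<le> int N \<Longrightarrow> \<bar>q\<bar> \<le> int N \<Longrightarrow> \<bar>p + q\<bar> < int M \<and> \<bar>p - q\<bar> < int M"
    using MN by auto
  note C = Csum[OF M] and S = Ssum[OF M]
  show ?thesis
  proof (cases "k = 0")
    case k0: True
    show ?thesis
    proof (cases "k' = 0")
      case True then show ?thesis using k0 by (simp add: psi1_ang w1_def power2_eq_square)
    next
      case False
      have "\<bar>k'\<bar> < int M" "\<bar>-k'\<bar> < int M" using k' MN by auto
      then show ?thesis using k0 False
        by (cases "k' < 0") (auto simp add: psi1_ang sum_cmul2 C S)
    qed
  next
    case kn0: False
    show ?thesis
    proof (cases "k' = 0")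
      case True
      have "\<bar>k\<bar> < int M" "\<bar>-k\<bar> < int M" using k MN by auto
      then show ?thesis using kn0 True
        by (cases "k < 0") (auto simp add: psi1_ang sum_cmul2 C S)
    next
      case kn0': False
      show ?thesis
      proof (cases "k < 0")
        case kneg: True
        show ?thesis
        proof (cases "k' < 0")
          case True
          have b: "\<bar>-k + -k'\<bar> < int M" "\<bar>-k - -k'\<bar> < int M" using bd[of "-k" "-k'"] k k' by auto
          have "-k + -k' \<noteq> 0" using kneg True by simp
          then show ?thesis using kneg True kn0 b
            by (auto simp add: psi1_ang sum_cmul2 ss_sum C w1_def power2_eq_square)
        next
          case False
          have b: "\<bar>-k + k'\<bar> < int M" "\<bar>-k - k'\<bar> < int M" using bd[of "-k" "k'"] k k' by auto
          then show ?thesis using kneg False kn0'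
            by (auto simp add: psi1_ang sum_cmul2 sc_sum S)
        qed
      next
        case kpos: False
        show ?thesis
        proof (cases "k' < 0")
          case True
          have b: "\<bar>k + -k'\<bar> < int M" "\<bar>k - -k'\<bar> < int M" using bd[of "k" "-k'"] k k' by auto
          then show ?thesis using kpos True kn0
            by (auto simp add: psi1_ang sum_cmul2 cs_sum S)
        next
          case False
          have b: "\<bar>k + k'\<bar> < int M" "\<bar>k - k'\<bar> < int M" using bd[of "k" "k'"] k k' by auto
          have "k + k' \<noteq> 0" using kpos kn0 False kn0' by simp
          then show ?thesis using kpos False kn0 kn0' b
            by (auto simp add: psi1_ang sum_cmul2 cc_sum C w1_def power2_eq_square)
        qed
      qed
    qed
  qed
qed


lemma vec_set_eq:
  "{k::'a^'d::finite. \<forall>j. k $ j \<in> A j} = (\<lambda>p. vec_lambda p) ` PiE UNIV A"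
proof (intro set_eqI iffI)
  fix k :: "'a^'d" assume "k \<in> {k. \<forall>j. k $ j \<in> A j}"
  then have "(\<lambda>j. k $ j) \<in> PiE UNIV A" by auto
  moreover have "k = vec_lambda (\<lambda>j. k $ j)" by simp
  ultimately show "k \<in> (\<lambda>p. vec_lambda p) ` PiE UNIV A" by blast
qed auto

lemma finite_vec_set:
  assumes "\<And>j. finite (A j)"
  shows "finite {k::'a^'d::finite. \<forall>j. k $ j \<in> A j}"
  unfolding vec_set_eq using assms by (intro finite_imageI finite_PiE) auto

lemma prod_sum_vec:
  fixes g :: "'d::finite \<Rightarrow> 'a \<Rightarrow> 'c::comm_semiring_1"
  assumes fin: "\<And>j. finite (A j)"
  shows "(\<Prod>j\<in>UNIV. \<Sum>i\<in>A j. g j i) = (\<Sum>k\<in>{k::'a^'d. \<forall>j. k $ j \<in> A j}. \<Prod>j\<in>UNIV. g j (k $ j))"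
proof -
  have inj: "inj_on (\<lambda>p. vec_lambda p :: 'a^'d) (PiE UNIV A)"
    by (intro inj_onI) (metis vec_lambda_inverse UNIV_I)
  have "(\<Prod>j\<in>UNIV. \<Sum>i\<in>A j. g j i) = (\<Sum>p\<in>PiE UNIV A. \<Prod>j\<in>UNIV. g j (p j))"
    using fin by (intro prod_sum_PiE) auto
  also have "\<dots> = (\<Sum>k\<in>(\<lambda>p. vec_lambda p :: 'a^'d) ` PiE UNIV A. \<Prod>j\<in>UNIV. g j (k $ j))"
    by (subst sum.reindex[OF inj]) simp
  finally show ?thesis unfolding vec_set_eq .
qed

definition grid :: "nat \<Rightarrow> real set" where
  "grid M = (\<lambda>m. real m / real M) ` {..<M}"

definition Grid :: "nat \<Rightarrow> (real^'d) set" where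
  "Grid M = {x. \<forall>j. x $ j \<in> grid M}"

definition Fbox :: "nat \<Rightarrow> (int^'d) set" where
  "Fbox N = {k. \<forall>j. k $ j \<in> {-int N..int N}}"

lemma finite_grid: "finite (grid M)" by (simp add: grid_def)
lemma finite_Grid: "finite (Grid M :: (real^'d::finite) set)"
  unfolding Grid_def by (rule finite_vec_set) (rule finite_grid)
lemma finite_Fbox: "finite (Fbox N :: (int^'d::finite) set)"
  unfolding Fbox_def by (rule finite_vec_set) simp

lemma sum_grid:
  assumes "M > 0"
  shows "(\<Sum>t\<in>grid M. f t) = (\<Sum>m<M. f (real m / real M))"
proof -
  have "inj_on (\<lambda>m. real m / real M) {..<M}" using assms by (intro inj_onI) (auto simp: field_simps)
  then show ?thesis unfolding grid_def by (simp add: sum.reindex)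
qed

lemma card_Grid:
  assumes "M > 0"
  shows "card (Grid M :: (real^'d::finite) set) = M ^ CARD('d)"
proof -
  have inj: "inj_on (\<lambda>p. vec_lambda p :: real^'d) (PiE UNIV (\<lambda>_. grid M))"
    by (intro inj_onI) (metis vec_lambda_inverse UNIV_I)
  have cg: "card (grid M) = M"
  proof -
    have "inj_on (\<lambda>m. real m / real M) {..<M}" using assms by (intro inj_onI) (auto simp: field_simps)
    then show ?thesis unfolding grid_def by (simp add: card_image)
  qed
  have "card (Grid M :: (real^'d) set) = card (PiE (UNIV::'d set) (\<lambda>_. grid M))"
    unfolding Grid_def vec_set_eq by (rule card_image[OF inj])
  also have "\<dots> = M ^ CARD('d)" by (simp add: card_PiE cg)
  finally show ?thesis .
qed

lemma Grid_torus: "M > 0 \<Longrightarrow> x \<in> Grid M \<Longrightarrow> 0 \<le> x $ j \<and> x $ j < 1"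
proof -
  assume M: "M > 0" and "x \<in> Grid M"
  then obtain m where "m < M" "x $ j = real m / real M" unfolding Grid_def grid_def by blast
  moreover have "real m / real M < 1" using M \<open>m < M\<close> by simp
  ultimately show ?thesis by simp
qed

definition W :: "(nat \<Rightarrow> real) \<Rightarrow> int^'d \<Rightarrow> real" where
  "W lam k = (\<Prod>j\<in>UNIV. w1 lam (k $ j))"

lemma orthd:
  fixes k k' :: "int^'d::finite"
  assumes MN: "M = 2*N+1" and k: "k \<in> Fbox N" and k': "k' \<in> Fbox N"
  shows "(\<Sum>x\<in>Grid M. psi lam k x * psi lam k' x) = (if k = k' then real M ^ CARD('d) * W lam k else 0)"
proof -
  have M: "M > 0" using MN by simp
  have "(\<Sum>x\<in>Grid M. psi lam k x * psi lam k' x) =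
        (\<Sum>x\<in>Grid M. \<Prod>j\<in>UNIV. psi1 lam (k $ j) (x $ j) * psi1 lam (k' $ j) (x $ j))"
    by (simp add: psi_def prod.distrib)
  also have "\<dots> = (\<Prod>j\<in>UNIV. \<Sum>t\<in>grid M. psi1 lam (k $ j) t * psi1 lam (k' $ j) t)"
    unfolding Grid_def by (rule prod_sum_vec[symmetric]) (rule finite_grid)
  also have "\<dots> = (\<Prod>j\<in>UNIV. if k $ j = k' $ j then real M * w1 lam (k $ j) else 0)"
  proof (intro prod.cong refl)
    fix j
    have "\<bar>k $ j\<bar> \<le> int N" "\<bar>k' $ j\<bar> \<le> int N" using k k' unfolding Fbox_def by (auto simp: abs_le_iff minus_le_iff)
    then show "(\<Sum>t\<in>grid M. psi1 lam (k $ j) t * psi1 lam (k' $ j) t) =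
       (if k $ j = k' $ j then real M * w1 lam (k $ j) else 0)"
      by (simp add: sum_grid[OF M] orth1[OF MN])
  qed
  also have "\<dots> = (if k = k' then real M ^ CARD('d) * W lam k else 0)"
  proof (cases "k = k'")
    case True then show ?thesis by (simp add: W_def prod.distrib)
  next
    case False
    then obtain j where "k $ j \<noteq> k' $ j" by (metis vec_eq_iff)
    then show ?thesis using False by (intro trans[OF prod_zero]) auto
  qed
  finally show ?thesis .
qed

lemma sq_sum1:
  "(\<Sum>i\<in>{-int N..int N}. (psi1 lam i y)\<^sup>2) = (\<Sum>i\<le>N. (lam i)\<^sup>2)"
proof (induction N)
  case 0 then show ?case by (simp add: psi1_def)
next
  case (Suc N)
  have e: "{-int (Suc N)..int (Suc N)} = insert (int N + 1) (insert (-(int N + 1)) {-int N..int N})"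
    by auto
  have "(psi1 lam (int N + 1) y)\<^sup>2 + (psi1 lam (-(int N + 1)) y)\<^sup>2 = (lam (Suc N))\<^sup>2"
  proof -
    have "psi1 lam (int N + 1) y = lam (Suc N) * cos (2 * pi * (1 + real N) * y)"
      by (simp add: psi1_def nat_add_distrib algebra_simps)
    moreover have "psi1 lam (-(int N + 1)) y = lam (Suc N) * sin (2 * pi * (1 + real N) * y)"
      by (simp add: psi1_def nat_add_distrib algebra_simps)
    ultimately show ?thesis
      by (metis distrib_left mult.right_neutral power_mult_distrib sin_cos_squared_add2)
  qed
  then show ?case using Suc e by simp
qed

lemma sq_sumd:
  "(\<Sum>k\<in>Fbox N. (psi lam k (x::real^'d::finite))\<^sup>2) = (\<Sum>i\<le>N. (lam i)\<^sup>2) ^ CARD('d)"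
proof -
  have "(\<Sum>k\<in>Fbox N. (psi lam k x)\<^sup>2) = (\<Sum>k\<in>Fbox N. \<Prod>j\<in>UNIV. (psi1 lam (k $ j) (x $ j))\<^sup>2)"
    by (simp add: psi_def prod_power_distrib)
  also have "\<dots> = (\<Prod>j\<in>(UNIV::'d set). \<Sum>i\<in>{-int N..int N}. (psi1 lam i (x $ j))\<^sup>2)"
    unfolding Fbox_def by (rule prod_sum_vec[symmetric]) simp
  also have "\<dots> = (\<Sum>i\<le>N. (lam i)\<^sup>2) ^ CARD('d)" by (simp add: sq_sum1)
  finally show ?thesis .
qed


definition ip :: "'k set \<Rightarrow> ('k \<Rightarrow> real) \<Rightarrow> ('k \<Rightarrow> real) \<Rightarrow> real" where
  "ip F u v = (\<Sum>k\<in>F. u k * v k)"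

lemma ip_comm: "ip F u v = ip F v u" by (simp add: ip_def mult.commute)
lemma ip_lc_left: "ip F (\<lambda>k. \<Sum>i<m. \<alpha> i * a i k) u = (\<Sum>i<m. \<alpha> i * ip F (a i) u)"
  unfolding ip_def by (simp add: sum_distrib_right sum_distrib_left mult_ac) (rule sum.swap)
lemma ip_lc_right: "ip F u (\<lambda>k. \<Sum>i<m. \<alpha> i * a i k) = (\<Sum>i<m. \<alpha> i * ip F u (a i))"
  using ip_lc_left[of F \<alpha> a m u] by (simp add: ip_comm)
lemma ip_diff_left: "ip F (\<lambda>k. u k - w k) z = ip F u z - ip F w z"
  by (simp add: ip_def left_diff_distrib sum_subtractf)
lemma ip_diff_right: "ip F z (\<lambda>k. u k - w k) = ip F z u - ip F z w"
  by (simp add: ip_def right_diff_distrib sum_subtractf)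
lemma ip_scale_left: "ip F (\<lambda>k. c * u k) z = c * ip F u z"
  by (simp add: ip_def sum_distrib_left mult_ac)
lemma ip_scale_right: "ip F z (\<lambda>k. c * u k) = c * ip F z u"
  by (simp add: ip_def sum_distrib_left mult_ac)
lemma ip_self_nonneg: "ip F u u \<ge> 0" by (simp add: ip_def sum_nonneg)

lemma ip_self_zero:
  assumes "finite F" "ip F w w = 0" "k \<in> F" shows "w k = 0"
proof -
  have "\<forall>k\<in>F. w k * w k = 0"
    using assms(2) unfolding ip_def by (subst sum_nonneg_eq_0_iff[symmetric]) (auto simp: assms(1))
  then show ?thesis using assms(3) by simp
qed

definition orthonormal_fam :: "'k set \<Rightarrow> nat \<Rightarrow> (nat \<Rightarrow> 'k \<Rightarrow> real) \<Rightarrow> bool" where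
  "orthonormal_fam F m a \<longleftrightarrow> (\<forall>i<m. \<forall>j<m. ip F (a i) (a j) = (if i = j then 1 else 0))"

lemma lc_orth:
  assumes "orthonormal_fam F m a" "j < m"
  shows "(\<Sum>i<m. \<alpha> i * ip F (a i) (a j)) = \<alpha> j"
proof -
  have "(\<Sum>i<m. \<alpha> i * ip F (a i) (a j)) = (\<Sum>i<m. if i = j then \<alpha> j else 0)"
    using assms unfolding orthonormal_fam_def by (intro sum.cong) auto
  also have "\<dots> = \<alpha> j" using assms(2) by simp
  finally show ?thesis .
qed

lemma gram_schmidt:
  assumes fin: "finite F"
  shows "\<exists>m a. m \<le> length rs \<and> orthonormal_fam F m a \<and>
           (\<forall>c. (\<forall>i<m. ip F c (a i) = 0) \<longrightarrow> (\<forall>r\<in>set rs. ip F c r = 0))"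
proof (induction rs)
  case Nil
  show ?case by (rule exI[of _ 0]) (auto simp: orthonormal_fam_def)
next
  case (Cons r rs)
  then obtain m a where m: "m \<le> length rs" and on: "orthonormal_fam F m a"
    and sp: "\<forall>c. (\<forall>i<m. ip F c (a i) = 0) \<longrightarrow> (\<forall>r\<in>set rs. ip F c r = 0)" by blast
  define w where "w = (\<lambda>k. r k - (\<Sum>i<m. ip F r (a i) * a i k))"
  have wa: "ip F w (a j) = 0" if "j < m" for j
    unfolding w_def ip_diff_left ip_lc_left using lc_orth[OF on that] by simp
  have rdec: "ip F c r = ip F c w + (\<Sum>i<m. ip F r (a i) * ip F c (a i))" for c
    unfolding w_def ip_diff_right ip_lc_right by simp
  show ?case
  proof (cases "ip F w w = 0")
    case True
    have "\<forall>c. (\<forall>i<m. ip F c (a i) = 0) \<longrightarrow> (\<forall>r'\<in>set (r # rs). ip F c r' = 0)"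
    proof (intro allI impI ballI)
      fix c r' assume c: "\<forall>i<m. ip F c (a i) = 0" and r': "r' \<in> set (r # rs)"
      have "ip F c w = 0" unfolding ip_def using ip_self_zero[OF fin True] by simp
      then have "ip F c r = 0" using rdec[of c] c by simp
      then show "ip F c r' = 0" using r' sp c by auto
    qed
    then show ?thesis using m on by (intro exI[of _ m] exI[of _ a]) auto
  next
    case False
    define \<rho> where "\<rho> = sqrt (ip F w w)"
    have \<rho>: "\<rho> > 0" using False ip_self_nonneg[of F w] unfolding \<rho>_def by simp
    define b where "b = (\<lambda>k. (1 / \<rho>) * w k)"
    define a' where "a' = a(m := b)"
    have bb: "ip F b b = 1" unfolding b_def ip_scale_left ip_scale_right \<rho>_def
      using False ip_self_nonneg[of F w] by (simp add: field_simps)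
    have ba: "ip F b (a j) = 0" if "j < m" for j unfolding b_def ip_scale_left using wa[OF that] by simp
    have on': "orthonormal_fam F (Suc m) a'"
      unfolding orthonormal_fam_def
    proof (intro allI impI)
      fix i j assume i: "i < Suc m" and j: "j < Suc m"
      show "ip F (a' i) (a' j) = (if i = j then 1 else 0)"
      proof (cases "i = m"; cases "j = m")
        assume "i = m" "j = m" then show ?thesis using bb by (simp add: a'_def)
      next
        assume "i = m" "j \<noteq> m" then show ?thesis using ba[of j] j by (simp add: a'_def)
      next
        assume "i \<noteq> m" "j = m" then show ?thesis using ba[of i] i by (simp add: a'_def ip_comm)
      next
        assume "i \<noteq> m" "j \<noteq> m" then show ?thesis using on i j by (simp add: a'_def orthonormal_fam_def)
      qed
    qed
    have "\<forall>c. (\<forall>i<Suc m. ip F c (a' i) = 0) \<longrightarrow> (\<forall>r'\<in>set (r # rs). ip F c r' = 0)"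
    proof (intro allI impI ballI)
      fix c r' assume c: "\<forall>i<Suc m. ip F c (a' i) = 0" and r': "r' \<in> set (r # rs)"
      have ca: "\<forall>i<m. ip F c (a i) = 0"
      proof (intro allI impI)
        fix i assume "i < m"
        then show "ip F c (a i) = 0" using c[rule_format, of i] by (simp add: a'_def)
      qed
      have "ip F c b = 0" using c by (auto simp: a'_def)
      then have "ip F c w = 0" unfolding b_def ip_scale_right using \<rho> by simp
      then have "ip F c r = 0" using rdec[of c] ca by simp
      then show "ip F c r' = 0" using r' sp ca by auto
    qed
    then show ?thesis using m on' by (intro exI[of _ "Suc m"] exI[of _ a']) auto
  qed
qed

lemma la_main:
  fixes v :: "'x \<Rightarrow> 'k \<Rightarrow> real"
  assumes finF: "finite F" and finG: "finite G" and neG: "G \<noteq> {}"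
    and vv: "\<And>x. x \<in> G \<Longrightarrow> ip F (v x) (v x) = s"
    and quad: "\<And>e. (\<Sum>x\<in>G. (ip F e (v x))\<^sup>2) \<le> B * ip F e e"
    and on: "orthonormal_fam F m a" and mn: "m \<le> n" and B: "B \<ge> 0"
    and t: "t \<ge> 0" "t\<^sup>2 < s - real n * B / real (card G)"
  shows "\<exists>x\<in>G. \<exists>c. (\<forall>i<m. ip F c (a i) = 0) \<and> ip F c c = 1 \<and> ip F c (v x) > t"
proof -
  define p where "p = (\<lambda>x k. v x k - (\<Sum>i<m. ip F (v x) (a i) * a i k))"
  have pa: "ip F (p x) (a j) = 0" if "j < m" for x j
    unfolding p_def ip_diff_left ip_lc_left using lc_orth[OF on that] by simp
  have pv: "ip F (p x) (v x) = s - (\<Sum>i<m. (ip F (v x) (a i))\<^sup>2)" if "x \<in> G" for x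
    unfolding p_def ip_diff_left ip_lc_left using vv[OF that]
    by (simp add: power2_eq_square ip_comm)
  have pp: "ip F (p x) (p x) = ip F (p x) (v x)" for x
  proof -
    have "ip F (p x) (p x) = ip F (p x) (\<lambda>k. v x k - (\<Sum>i<m. ip F (v x) (a i) * a i k))"
      by (simp add: p_def)
    also have "\<dots> = ip F (p x) (v x) - (\<Sum>i<m. ip F (v x) (a i) * ip F (p x) (a i))"
      by (simp only: ip_diff_right ip_lc_right)
    finally have "ip F (p x) (p x) = ip F (p x) (v x) - (\<Sum>i<m. ip F (v x) (a i) * ip F (p x) (a i))" .
    then show ?thesis using pa by simp
  qed
  have "(\<Sum>x\<in>G. \<Sum>i<m. (ip F (v x) (a i))\<^sup>2) = (\<Sum>i<m. \<Sum>x\<in>G. (ip F (a i) (v x))\<^sup>2)"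
    by (subst sum.swap) (simp add: ip_comm)
  also have "\<dots> \<le> (\<Sum>i<m. B)"
  proof (rule sum_mono)
    fix i assume "i \<in> {..<m}"
    then have "ip F (a i) (a i) = 1" using on by (simp add: orthonormal_fam_def)
    then show "(\<Sum>x\<in>G. (ip F (a i) (v x))\<^sup>2) \<le> B" using quad[of "a i"] by simp
  qed
  also have "\<dots> \<le> real n * B" using mn B by (simp add: mult_right_mono)
  finally have S: "(\<Sum>x\<in>G. \<Sum>i<m. (ip F (v x) (a i))\<^sup>2) \<le> real n * B" .
  have cG: "real (card G) > 0" using finG neG by (simp add: card_gt_0_iff)
  have "\<exists>x\<in>G. ip F (p x) (p x) > t\<^sup>2"
  proof (rule ccontr)
    assume "\<not> ?thesis"
    then have le: "\<And>x. x \<in> G \<Longrightarrow> s - (\<Sum>i<m. (ip F (v x) (a i))\<^sup>2) \<le> t\<^sup>2"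
      using pp pv by fastforce
    have "(\<Sum>x\<in>G. s - (\<Sum>i<m. (ip F (v x) (a i))\<^sup>2)) \<le> (\<Sum>x\<in>G. t\<^sup>2)" by (rule sum_mono) (rule le)
    then have "real (card G) * s - real n * B \<le> real (card G) * t\<^sup>2"
      using S by (simp add: sum_subtractf)
    then have "s - real n * B / real (card G) \<le> t\<^sup>2" using cG by (simp add: field_simps)
    then show False using t by simp
  qed
  then obtain x where x: "x \<in> G" and px: "ip F (p x) (p x) > t\<^sup>2" by blast
  define \<rho> where "\<rho> = sqrt (ip F (p x) (p x))"
  have \<rho>t: "\<rho> > t" unfolding \<rho>_def using px t by (metis real_less_rsqrt)
  then have \<rho>: "\<rho> > 0" using t by simp
  have \<rho>2: "\<rho> * \<rho> = ip F (p x) (p x)" unfolding \<rho>_def using ip_self_nonneg[of F "p x"] by simp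
  define c where "c = (\<lambda>k. (1 / \<rho>) * p x k)"
  have "\<forall>i<m. ip F c (a i) = 0" unfolding c_def ip_scale_left using pa by simp
  moreover have "ip F c c = 1" unfolding c_def ip_scale_left ip_scale_right using \<rho> \<rho>2
    by (simp add: field_simps) (metis \<rho>2 \<rho> mult_pos_pos less_irrefl)
  moreover have "ip F c (v x) = \<rho>" unfolding c_def ip_scale_left using \<rho> \<rho>2 pp[of x]
    by (simp add: field_simps)
  ultimately show ?thesis using x \<rho>t by blast
qed


lemma torus_sets: "torus \<in> sets (lebesgue :: (real^'d::finite) measure)"
proof -
  have "torus = (\<Inter>j. {x::real^'d. 0 \<le> x $ j} \<inter> {x. x $ j < 1})" unfolding torus_def by auto
  also have "\<dots> \<in> sets lebesgue"
    by (intro sets.finite_INT) (auto intro!: sets.Int lebesgue_measurable_vimage_borel)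
  finally show ?thesis .
qed

lemma space_Tmeas: "space (Tmeas :: (real^'d::finite) measure) = torus"
  by (simp add: Tmeas_def space_restrict_space)

lemma sets_Tmeas_torus: "torus \<inter> space lebesgue \<in> sets (lebesgue :: (real^'d::finite) measure)"
  using torus_sets by simp

lemma emeasure_Tmeas: "A \<subseteq> torus \<Longrightarrow> emeasure (Tmeas :: (real^'d::finite) measure) A = emeasure lebesgue A"
  unfolding Tmeas_def by (rule emeasure_restrict_space[OF sets_Tmeas_torus])

lemma esssup_ge:
  fixes g :: "'a \<Rightarrow> ereal"
  assumes "emeasure M {x\<in>space M. g x > z} > 0"
  shows "z \<le> esssup M g"
proof (rule ccontr)
  assume "\<not> z \<le> esssup M g"
  then have lt: "esssup M g < z" by simp
  show False
  proof (cases "g \<in> borel_measurable M")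
    case False then show False using lt by (simp add: esssup_non_measurable)
  next
    case True
    then have "{x\<in>space M. g x > esssup M g} \<in> sets M" by measurable
    moreover have "{x\<in>space M. g x > z} \<subseteq> {x\<in>space M. g x > esssup M g}" using lt by auto
    ultimately have "emeasure M {x\<in>space M. g x > z} \<le> emeasure M {x\<in>space M. g x > esssup M g}"
      by (rule emeasure_mono[rotated])
    then show False using assms esssup_zero_measure[of M g] by simp
  qed
qed

lemma cont_meas_T:
  fixes f :: "real^'d::finite \<Rightarrow> real"
  assumes "continuous_on UNIV f"
  shows "f \<in> borel_measurable Tmeas"
  unfolding Tmeas_def
  by (rule continuous_imp_measurable_on_sets_lebesgue[OF continuous_on_subset[OF assms] torus_sets]) simp

lemma One_cart_nth[simp]: "(One::real^'d::finite) $ i = 1"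
  by (metis Cart_1 one_index)

lemma box_comp: "(x0 + \<eta> *\<^sub>R (One::real^'d::finite)) $ i = x0 $ i + \<eta>"
  by (simp only: vector_add_component vector_scaleR_component One_cart_nth) simp

lemma grid_box:
  fixes f :: "real^'d::finite \<Rightarrow> real"
  assumes cont: "continuous_on UNIV f" and M: "M > 0" and x0: "x0 \<in> Grid M" and ft: "f x0 > t"
  shows "\<exists>\<eta>>0. cbox x0 (x0 + \<eta> *\<^sub>R One) \<subseteq> torus \<and> (\<forall>y\<in>cbox x0 (x0 + \<eta> *\<^sub>R One). f y > t)"
proof -
  obtain \<epsilon> where \<epsilon>: "\<epsilon> > 0" and h: "\<forall>y. dist y x0 < \<epsilon> \<longrightarrow> dist (f y) (f x0) < f x0 - t"
    using cont ft unfolding continuous_on_iff by (metis UNIV_I diff_gt_0_iff_gt)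
  define \<eta> where "\<eta> = min (\<epsilon> / (2 * real CARD('d))) (1 / (2 * real M))"
  have \<eta>: "\<eta> > 0" unfolding \<eta>_def using \<epsilon> M by simp
  have x0c: "x0 $ j \<le> 1 - 1 / real M" for j
  proof -
    obtain m where "m < M" "x0 $ j = real m / real M" using x0 unfolding Grid_def grid_def by blast
    then show ?thesis using M by (simp add: field_simps)
  qed
  have x0p: "x0 $ j \<ge> 0" for j using Grid_torus[OF M x0] by simp
  have "cbox x0 (x0 + \<eta> *\<^sub>R One) \<subseteq> torus"
  proof
    fix y assume "y \<in> cbox x0 (x0 + \<eta> *\<^sub>R One)"
    then have y: "\<And>j. x0 $ j \<le> y $ j \<and> y $ j \<le> x0 $ j + \<eta>" by (simp only: mem_box_cart box_comp)
    have "\<eta> \<le> 1 / (2 * real M)" unfolding \<eta>_def by simp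
    moreover have "1 / (2 * real M) < 1 / real M" using M by (simp add: field_simps)
    ultimately have "\<And>j. y $ j < 1 \<and> 0 \<le> y $ j"
      using y x0c x0p by (smt (verit))
    then show "y \<in> torus" unfolding torus_def by simp
  qed
  moreover have "\<forall>y\<in>cbox x0 (x0 + \<eta> *\<^sub>R One). f y > t"
  proof
    fix y assume "y \<in> cbox x0 (x0 + \<eta> *\<^sub>R One)"
    then have y: "\<And>j. x0 $ j \<le> y $ j \<and> y $ j \<le> x0 $ j + \<eta>" by (simp only: mem_box_cart box_comp)
    have "dist y x0 = norm (y - x0)" by (simp add: dist_norm)
    also have "\<dots> \<le> (\<Sum>j\<in>UNIV. \<bar>(y - x0) $ j\<bar>)" by (rule norm_le_l1_cart)
    also have "\<dots> \<le> (\<Sum>j\<in>(UNIV::'d set). \<eta>)" proof (intro sum_mono)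
      fix j show "\<bar>(y - x0) $ j\<bar> \<le> \<eta>" using y[of j] by simp
    qed
    also have "\<dots> = real CARD('d) * \<eta>" by simp
    also have "\<dots> \<le> real CARD('d) * (\<epsilon> / (2 * real CARD('d)))" unfolding \<eta>_def
      by (intro mult_left_mono) auto
    also have "\<dots> < \<epsilon>" using \<epsilon> by simp
    finally have "dist (f y) (f x0) < f x0 - t" using h by blast
    then show "f y > t" by (simp add: dist_real_def)
  qed
  ultimately show ?thesis using \<eta> by blast
qed

lemma sign_choice:
  fixes f :: "real^'d::finite \<Rightarrow> real"
  assumes cont: "continuous_on UNIV f" and M: "M > 0" and x0: "x0 \<in> Grid M" and ft: "f x0 > t"
    and phi: "\<phi> \<in> borel_measurable Tmeas"
  shows "ereal t \<le> Linf_norm (\<lambda>x. f x - \<phi> x) \<or> ereal t \<le> Linf_norm (\<lambda>x. - f x - \<phi> x)"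
proof -
  obtain \<eta> where \<eta>: "\<eta> > 0" and Bt: "cbox x0 (x0 + \<eta> *\<^sub>R One) \<subseteq> torus"
    and Bf: "\<forall>y\<in>cbox x0 (x0 + \<eta> *\<^sub>R One). f y > t" using grid_box[OF cont M x0 ft] by blast
  define B where "B = cbox x0 (x0 + \<eta> *\<^sub>R One)"
  have fm[measurable]: "f \<in> borel_measurable Tmeas" by (rule cont_meas_T[OF cont])
  note phi[measurable]
  define A1 where "A1 = {x\<in>space Tmeas. ereal t < ereal \<bar>f x - \<phi> x\<bar>}"
  define A2 where "A2 = {x\<in>space Tmeas. ereal t < ereal \<bar>- f x - \<phi> x\<bar>}"
  have A1s: "A1 \<in> sets Tmeas" unfolding A1_def by measurable
  have A2s: "A2 \<in> sets Tmeas" unfolding A2_def by measurable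
  have "B \<subseteq> A1 \<union> A2"
  proof
    fix y assume y: "y \<in> B"
    then have "f y > t" using Bf B_def by blast
    then have "t < \<bar>f y - \<phi> y\<bar> \<or> t < \<bar>- f y - \<phi> y\<bar>" by linarith
    then show "y \<in> A1 \<union> A2" using y Bt unfolding A1_def A2_def B_def space_Tmeas by auto
  qed
  have "0 < emeasure lebesgue B" unfolding B_def using \<eta>
    by (simp add: emeasure_lborel_cbox_eq inner_add_left prod_pos)
  also have "\<dots> = emeasure Tmeas B" using Bt B_def emeasure_Tmeas by metis
  also have "\<dots> \<le> emeasure Tmeas (A1 \<union> A2)" using \<open>B \<subseteq> A1 \<union> A2\<close> A1s A2s
    by (intro emeasure_mono) auto
  also have "\<dots> \<le> emeasure Tmeas A1 + emeasure Tmeas A2" using A1s A2s by (rule emeasure_subadditive)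
  finally have "0 < emeasure Tmeas A1 \<or> 0 < emeasure Tmeas A2"
    by (metis add.left_neutral not_gr_zero)
  then show ?thesis unfolding Linf_norm_def A1_def A2_def
    by (auto intro: esssup_ge)
qed


definition fser :: "(nat \<Rightarrow> real) \<Rightarrow> (int^'d) set \<Rightarrow> (int^'d \<Rightarrow> real) \<Rightarrow> real^'d \<Rightarrow> real" where
  "fser lam F c = (\<lambda>x. \<Sum>k\<in>F. c k * psi lam k x)"

definition restr :: "'a set \<Rightarrow> ('a \<Rightarrow> real) \<Rightarrow> 'a \<Rightarrow> real" where
  "restr F c = (\<lambda>k. if k \<in> F then c k else 0)"

lemma series_restr:
  assumes "finite F"
  shows "series lam (restr F c) = fser lam F c"
proof
  fix x
  have "(\<Sum>\<^sub>\<infinity>k. restr F c k * psi lam k x) = (\<Sum>\<^sub>\<infinity>k\<in>F. c k * psi lam k x)"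
    by (rule infsum_cong_neutral) (auto simp: restr_def)
  then show "series lam (restr F c) x = fser lam F c x"
    using assms by (simp add: series_def fser_def)
qed

lemma l2coeff_restr: "finite F \<Longrightarrow> l2coeff (restr F c)"
proof -
  assume F: "finite F"
  have "(\<lambda>k. (c k)\<^sup>2) summable_on F" using F by simp
  moreover have "(\<lambda>k. (c k)\<^sup>2) summable_on F \<longleftrightarrow> (\<lambda>k. (restr F c k)\<^sup>2) summable_on UNIV"
    by (rule summable_on_cong_neutral) (simp_all add: restr_def)
  ultimately show ?thesis unfolding l2coeff_def by simp
qed

lemma infsum_restr: "finite F \<Longrightarrow> (\<Sum>\<^sub>\<infinity>k. (restr F c k)\<^sup>2) = (\<Sum>k\<in>F. (c k)\<^sup>2)"
proof -
  assume "finite F"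
  have "(\<Sum>\<^sub>\<infinity>k. (restr F c k)\<^sup>2) = (\<Sum>\<^sub>\<infinity>k\<in>F. (c k)\<^sup>2)"
    by (rule infsum_cong_neutral) (auto simp: restr_def)
  then show ?thesis using \<open>finite F\<close> by simp
qed

lemma fser_Hspace: "finite F \<Longrightarrow> fser lam F c \<in> Hspace lam"
  unfolding Hspace_def mem_Collect_eq
  by (rule exI[of _ "restr F c"]) (simp add: series_restr l2coeff_restr)

lemma Hnorm_le:
  assumes "l2coeff c"
  shows "Hnorm lam (series lam c) \<le> sqrt (\<Sum>\<^sub>\<infinity>k. (c k)\<^sup>2)"
  unfolding Hnorm_def
proof (rule cInf_lower)
  show "sqrt (\<Sum>\<^sub>\<infinity>k. (c k)\<^sup>2) \<in> {sqrt (\<Sum>\<^sub>\<infinity>k. (c' k)\<^sup>2) |c'. l2coeff c' \<and> series lam c = series lam c'}"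
    using assms by blast
  show "bdd_below {sqrt (\<Sum>\<^sub>\<infinity>k. (c' k)\<^sup>2) |c'. l2coeff c' \<and> series lam c = series lam c'}"
  proof (rule bdd_belowI[of _ 0])
    fix y assume "y \<in> {sqrt (\<Sum>\<^sub>\<infinity>k. (c' k)\<^sup>2) |c'. l2coeff c' \<and> series lam c = series lam c'}"
    then have "\<exists>d. series lam c = series lam d \<and> y = sqrt (\<Sum>\<^sub>\<infinity>k. (d k)\<^sup>2)" by blast
    then show "0 \<le> y"
    proof (elim exE)
      fix d assume y: "series lam c = series lam d \<and> y = sqrt (\<Sum>\<^sub>\<infinity>k. (d k)\<^sup>2)"
      have "(\<Sum>\<^sub>\<infinity>k. (d k)\<^sup>2) \<ge> 0" by (rule infsum_nonneg) simp
      then show "0 \<le> y" using y by simp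
    qed
  qed
qed

lemma fser_Hball:
  assumes "finite F" "(\<Sum>k\<in>F. (c k)\<^sup>2) \<le> 1"
  shows "fser lam F c \<in> Hball lam"
proof -
  have "Hnorm lam (fser lam F c) \<le> sqrt (\<Sum>k\<in>F. (c k)\<^sup>2)"
    using Hnorm_le[OF l2coeff_restr[OF assms(1)], of lam]
    by (simp add: series_restr[OF assms(1)] infsum_restr[OF assms(1)])
  also have "\<dots> \<le> 1" using assms(2) by simp
  finally show ?thesis unfolding Hball_def using fser_Hspace[OF assms(1)] by simp
qed

lemma fser_neg: "(\<lambda>x. - fser lam F c x) = fser lam F (\<lambda>k. - c k)"
  by (simp add: fser_def sum_negf)

lemma clf_zero:
  assumes "clf lam L" shows "L (\<lambda>x. 0) = 0"
proof -
  have z: "(\<lambda>x. 0) \<in> Hspace lam" using fser_Hspace[of "{}" lam] by (simp add: fser_def)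
  have "\<forall>f\<in>Hspace lam. \<forall>g\<in>Hspace lam. \<forall>a b. L (\<lambda>x. a * f x + b * g x) = a * L f + b * L g"
    using assms unfolding clf_def by blast
  from this[rule_format, OF z z, of 0 0]
  have "L (\<lambda>x. 0 * 0 + 0 * 0) = 0 * L (\<lambda>x. 0) + 0 * L (\<lambda>x. 0)" .
  then show ?thesis by simp
qed

lemma clf_fser:
  assumes L: "clf lam L" and F: "finite F"
  shows "L (fser lam F c) = (\<Sum>k\<in>F. c k * L (psi lam k))"
  using F
proof (induction F rule: finite_induct)
  case empty
  then show ?case using clf_zero[OF L] by (simp add: fser_def)
next
  case (insert j F)
  have pj: "psi lam j \<in> Hspace lam" using fser_Hspace[of "{j}" lam "\<lambda>_. 1"] by (simp add: fser_def)
  have "fser lam (insert j F) c = (\<lambda>x. 1 * fser lam F c x + c j * psi lam j x)"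
    using insert by (simp add: fser_def add.commute)
  moreover have "\<forall>f\<in>Hspace lam. \<forall>g\<in>Hspace lam. \<forall>a b. L (\<lambda>x. a * f x + b * g x) = a * L f + b * L g"
    using L unfolding clf_def by blast
  note lin = this[rule_format, OF fser_Hspace[OF insert(1), of lam c] pj, of 1 "c j"]
  ultimately have "L (fser lam (insert j F) c) = 1 * L (fser lam F c) + c j * L (psi lam j)"
    by simp
  then show ?case using insert by (simp add: add.commute)
qed

lemma psi1_cont: "continuous_on UNIV (\<lambda>x::real^'d::finite. psi1 lam p (x $ j))"
proof (cases "p = 0")
  case True then show ?thesis by (simp add: psi1_def)
next
  case False
  show ?thesis
  proof (cases "p < 0")
    case True then show ?thesis using False unfolding psi1_def
      by simp (intro continuous_intros)
  next
    case False2: False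
    then show ?thesis using False unfolding psi1_def
      by simp (intro continuous_intros)
  qed
qed

lemma psi_cont: "continuous_on UNIV (psi lam k :: real^'d::finite \<Rightarrow> real)"
proof -
  have "continuous_on UNIV (\<lambda>x::real^'d. \<Prod>j\<in>UNIV. psi1 lam (k $ j) (x $ j))"
    by (intro continuous_on_prod psi1_cont)
  then show ?thesis unfolding psi_def[abs_def] .
qed

lemma fser_cont: "continuous_on UNIV (fser lam F c :: real^'d::finite \<Rightarrow> real)"
proof -
  have "continuous_on UNIV (\<lambda>x::real^'d. \<Sum>k\<in>F. c k * psi lam k x)"
    by (intro continuous_on_sum continuous_on_mult continuous_on_const psi_cont)
  then show ?thesis unfolding fser_def .
qed


lemma quad_bound:
  fixes e :: "int^'d::finite \<Rightarrow> real"
  assumes MN: "M = 2*N+1" and Wb: "\<And>k::int^'d. W lam k \<le> b"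
  shows "(\<Sum>x\<in>Grid M. (ip (Fbox N) e (\<lambda>k. psi lam k x))\<^sup>2) \<le> (real M ^ CARD('d) * b) * ip (Fbox N) e e"
proof -
  let ?F = "Fbox N :: (int^'d) set"
  have finF: "finite ?F" by (rule finite_Fbox)
  have "(\<Sum>x\<in>Grid M. (ip ?F e (\<lambda>k. psi lam k x))\<^sup>2) =
        (\<Sum>x\<in>Grid M. \<Sum>k\<in>?F. \<Sum>k'\<in>?F. e k * e k' * (psi lam k x * psi lam k' x))"
    unfolding ip_def power2_eq_square by (simp add: sum_product mult_ac)
  also have "\<dots> = (\<Sum>k\<in>?F. \<Sum>k'\<in>?F. e k * e k' * (\<Sum>x\<in>Grid M. psi lam k x * psi lam k' x))"
    by (simp add: sum.swap[of _ "Grid M"] sum_distrib_left)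
  also have "\<dots> = (\<Sum>k\<in>?F. \<Sum>k'\<in>?F. e k * e k' * (if k = k' then real M ^ CARD('d) * W lam k else 0))"
    by (intro sum.cong refl) (simp add: orthd[OF MN])
  also have "\<dots> = (\<Sum>k\<in>?F. e k * e k * (real M ^ CARD('d) * W lam k))"
    by (intro sum.cong refl) (simp add: finF if_distrib cong: if_cong)
  also have "\<dots> \<le> (\<Sum>k\<in>?F. e k * e k * (real M ^ CARD('d) * b))"
    by (intro sum_mono mult_left_mono) (auto intro: mult_left_mono simp: Wb)
  also have "\<dots> = (real M ^ CARD('d) * b) * ip ?F e e"
    unfolding ip_def by (simp add: sum_distrib_left mult_ac)
  finally show ?thesis .
qed

lemma sN_lim:
  fixes lam :: "nat \<Rightarrow> real"
  assumes sum1: "(\<lambda>k. (lam k)\<^sup>2) sums 1"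
  shows "(\<lambda>N. (\<Sum>i\<le>N. (lam i)\<^sup>2) ^ CARD('d::finite)) \<longlonglongrightarrow> 1"
proof -
  have "(\<lambda>n. \<Sum>i<n. (lam i)\<^sup>2) \<longlonglongrightarrow> 1" using sum1 by (simp add: sums_def)
  then have "(\<lambda>N. \<Sum>i<Suc N. (lam i)\<^sup>2) \<longlonglongrightarrow> 1" by (rule LIMSEQ_Suc)
  then have "(\<lambda>N. \<Sum>i\<le>N. (lam i)\<^sup>2) \<longlonglongrightarrow> 1" by (simp add: lessThan_Suc_atMost)
  then have "(\<lambda>N. (\<Sum>i\<le>N. (lam i)\<^sup>2) ^ CARD('d)) \<longlonglongrightarrow> 1 ^ CARD('d)" by (intro tendsto_power)
  then show ?thesis by simp
qed

lemma core:
  fixes lam :: "nat \<Rightarrow> real" and L :: "nat \<Rightarrow> (real^'d::finite \<Rightarrow> real) \<Rightarrow> real"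
    and \<phi> :: "real^'d \<Rightarrow> real"
  assumes sum1: "(\<lambda>k. (lam k)\<^sup>2) sums 1"
    and Wb: "\<And>k::int^'d. W lam k \<le> b ^ CARD('d)" and b: "b \<ge> 0"
    and clfs: "\<forall>i<n. clf lam (L i)"
    and phi: "\<phi> \<in> borel_measurable Tmeas"
    and t: "t \<ge> 0" "t\<^sup>2 < 1 - real n * b ^ CARD('d)"
  shows "\<exists>f\<in>Hball lam. (\<forall>i<n. L i f = 0) \<and> ereal t \<le> Linf_norm (\<lambda>x. f x - \<phi> x)"
proof -
  have "\<forall>\<^sub>F N in sequentially. t\<^sup>2 + real n * b ^ CARD('d) < (\<Sum>i\<le>N. (lam i)\<^sup>2) ^ CARD('d)"
    using order_tendstoD(1)[OF sN_lim[OF sum1, where 'd='d], of "t\<^sup>2 + real n * b ^ CARD('d)"] t by simp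
  then obtain N where N: "t\<^sup>2 + real n * b ^ CARD('d) < (\<Sum>i\<le>N. (lam i)\<^sup>2) ^ CARD('d)"
    by (auto simp: eventually_sequentially)
  define M where "M = 2*N+1"
  have M: "M > 0" unfolding M_def by simp
  define F where "F = (Fbox N :: (int^'d) set)"
  define G where "G = (Grid M :: (real^'d) set)"
  define s where "s = (\<Sum>i\<le>N. (lam i)\<^sup>2) ^ CARD('d)"
  define v where "v = (\<lambda>x k. psi lam k (x::real^'d))"
  have finF: "finite F" unfolding F_def by (rule finite_Fbox)
  have finG: "finite G" unfolding G_def by (rule finite_Grid)
  have cG: "card G = M ^ CARD('d)" unfolding G_def by (rule card_Grid[OF M])
  have "card G > 0" using cG M by simp
  then have neG: "G \<noteq> {}" by auto
  have vv: "ip F (v x) (v x) = s" if "x \<in> G" for x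
    unfolding ip_def v_def F_def s_def using sq_sumd[where N=N and lam=lam and x=x] by (simp add: power2_eq_square)
  define B where "B = real M ^ CARD('d) * b ^ CARD('d)"
  have B: "B \<ge> 0" unfolding B_def using b by simp
  have quad: "(\<Sum>x\<in>G. (ip F e (v x))\<^sup>2) \<le> B * ip F e e" for e
    unfolding G_def F_def v_def B_def by (rule quad_bound[OF M_def Wb])
  define r where "r = (\<lambda>i k. L i (psi lam k))"
  obtain m a where m: "m \<le> length (map r [0..<n])" and on: "orthonormal_fam F m a"
    and sp: "\<forall>c. (\<forall>i<m. ip F c (a i) = 0) \<longrightarrow> (\<forall>r'\<in>set (map r [0..<n]). ip F c r' = 0)"
    using gram_schmidt[OF finF] by blast
  have tt: "t\<^sup>2 < s - real n * B / real (card G)"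
    using N M unfolding s_def B_def cG by (simp add: field_simps)
  obtain x0 c where x0: "x0 \<in> G" and ca: "\<forall>i<m. ip F c (a i) = 0" and cc: "ip F c c = 1"
    and cv: "ip F c (v x0) > t"
  proof -
    have mn: "m \<le> n" using m by simp
    show ?thesis using la_main[OF finF finG neG vv quad on mn B t(1) tt] that by blast
  qed
  have cr: "ip F c (r i) = 0" if "i < n" for i using sp ca that by auto
  define f0 where "f0 = fser lam F c"
  have Lf0: "L i f0 = 0" if "i < n" for i
    using clf_fser[OF clfs[rule_format, OF that] finF, of c] cr[OF that]
    unfolding f0_def ip_def r_def by simp
  have Lmf0: "L i (fser lam F (\<lambda>k. - c k)) = 0" if "i < n" for i
    using clf_fser[OF clfs[rule_format, OF that] finF, of "\<lambda>k. - c k"] cr[OF that]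
    unfolding ip_def r_def by (simp add: sum_negf)
  have f0H: "f0 \<in> Hball lam" unfolding f0_def
    by (rule fser_Hball[OF finF]) (use cc in \<open>simp add: ip_def power2_eq_square\<close>)
  have mf0H: "fser lam F (\<lambda>k. - c k) \<in> Hball lam"
    by (rule fser_Hball[OF finF]) (use cc in \<open>simp add: ip_def power2_eq_square\<close>)
  have f0x0: "f0 x0 > t" using cv unfolding f0_def fser_def ip_def v_def by (simp add: mult_ac)
  have x0G: "x0 \<in> Grid M" using x0 G_def by simp
  have "ereal t \<le> Linf_norm (\<lambda>x. f0 x - \<phi> x) \<or> ereal t \<le> Linf_norm (\<lambda>x. - f0 x - \<phi> x)"
    by (rule sign_choice[where f=f0, OF _ M x0G f0x0 phi]) (simp add: f0_def fser_cont)
  then show ?thesis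
  proof
    assume "ereal t \<le> Linf_norm (\<lambda>x. f0 x - \<phi> x)"
    then show ?thesis using f0H Lf0 by blast
  next
    assume "ereal t \<le> Linf_norm (\<lambda>x. - f0 x - \<phi> x)"
    moreover have "\<And>x. - f0 x = fser lam F (\<lambda>k. - c k) x" unfolding f0_def
      by (simp add: fser_def sum_negf)
    ultimately have "ereal t \<le> Linf_norm (\<lambda>x. fser lam F (\<lambda>k. - c k) x - \<phi> x)"
      by simp
    then show ?thesis using mf0H Lmf0 by blast
  qed
qed


lemma Fbox_mono: "N \<le> N' \<Longrightarrow> Fbox N \<subseteq> (Fbox N' :: (int^'d::finite) set)"
proof
  fix k :: "int^'d" assume le: "N \<le> N'" and "k \<in> Fbox N"
  then have h: "\<And>j. -int N \<le> k$j \<and> k$j \<le> int N" by (simp add: Fbox_def)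
  have "-int N' \<le> k$j \<and> k$j \<le> int N'" for j using h[of j] le by linarith
  then show "k \<in> Fbox N'" by (simp add: Fbox_def)
qed

lemma fin_in_Fbox:
  assumes "finite (X :: (int^'d::finite) set)"
  shows "\<exists>N. X \<subseteq> Fbox N"
proof -
  define N where "N = (\<Sum>k\<in>X. \<Sum>j\<in>UNIV. nat \<bar>k $ j\<bar>)"
  have "X \<subseteq> Fbox N"
  proof
    fix k assume k: "k \<in> X"
    have h: "\<bar>k $ j\<bar> \<le> int N" for j
    proof -
      have "nat \<bar>k $ j\<bar> \<le> (\<Sum>j\<in>UNIV. nat \<bar>k $ j\<bar>)" by (rule member_le_sum) auto
      also have "\<dots> \<le> N" unfolding N_def using k assms by (intro member_le_sum) auto
      finally show ?thesis by (simp add: nat_le_iff)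
    qed
    show "k \<in> Fbox N" unfolding Fbox_def using h by (simp add: abs_le_iff minus_le_iff)
  qed
  then show ?thesis by blast
qed

lemma Fbox_lim: "filterlim (\<lambda>N. Fbox N :: (int^'d::finite) set) (finite_subsets_at_top UNIV) sequentially"
  unfolding filterlim_finite_subsets_at_top
proof (intro allI impI)
  fix X :: "(int^'d) set" assume "finite X \<and> X \<subseteq> UNIV"
  then obtain N0 where X: "X \<subseteq> Fbox N0" using fin_in_Fbox by blast
  show "\<forall>\<^sub>F N in sequentially. finite (Fbox N) \<and> X \<subseteq> Fbox N \<and> Fbox N \<subseteq> UNIV"
    unfolding eventually_sequentially using X Fbox_mono finite_Fbox by blast
qed

lemma partial_le1:
  fixes lam :: "nat \<Rightarrow> real"
  assumes sum1: "(\<lambda>k. (lam k)\<^sup>2) sums 1"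
  shows "(\<Sum>i\<le>N. (lam i)\<^sup>2) \<le> 1"
  using sum_le_suminf[of "\<lambda>k. (lam k)\<^sup>2" "{..N}"] sums_summable[OF sum1] sums_unique[OF sum1] by simp

lemma psi_sq_le1:
  fixes lam :: "nat \<Rightarrow> real"
  assumes sum1: "(\<lambda>k. (lam k)\<^sup>2) sums 1" and X: "finite (X :: (int^'d::finite) set)"
  shows "(\<Sum>k\<in>X. (psi lam k x)\<^sup>2) \<le> 1"
proof -
  obtain N where N: "X \<subseteq> Fbox N" using fin_in_Fbox[OF X] by blast
  have "(\<Sum>k\<in>X. (psi lam k x)\<^sup>2) \<le> (\<Sum>k\<in>Fbox N. (psi lam k x)\<^sup>2)"
    by (rule sum_mono2[OF finite_Fbox N]) simp
  also have "\<dots> = (\<Sum>i\<le>N. (lam i)\<^sup>2) ^ CARD('d)" by (rule sq_sumd)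
  also have "\<dots> \<le> 1" using partial_le1[OF sum1] by (intro power_le_one) (auto intro: sum_nonneg)
  finally show ?thesis .
qed

lemma ser_abs_bound:
  fixes lam :: "nat \<Rightarrow> real" and c :: "int^'d::finite \<Rightarrow> real"
  assumes sum1: "(\<lambda>k. (lam k)\<^sup>2) sums 1" and c: "l2coeff c" and X: "finite X"
  shows "(\<Sum>k\<in>X. \<bar>c k * psi lam k x\<bar>) \<le> sqrt (\<Sum>\<^sub>\<infinity>k. (c k)\<^sup>2)"
proof (rule real_le_rsqrt)
  have "(\<Sum>k\<in>X. \<bar>c k * psi lam k x\<bar>)\<^sup>2 = (\<Sum>k\<in>X. \<bar>c k\<bar> * \<bar>psi lam k x\<bar>)\<^sup>2" by (simp add: abs_mult)
  also have "\<dots> \<le> (\<Sum>k\<in>X. \<bar>c k\<bar>\<^sup>2) * (\<Sum>k\<in>X. \<bar>psi lam k x\<bar>\<^sup>2)" by (rule Cauchy_Schwarz_ineq_sum)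
  also have "\<dots> = (\<Sum>k\<in>X. (c k)\<^sup>2) * (\<Sum>k\<in>X. (psi lam k x)\<^sup>2)" by simp
  also have "\<dots> \<le> (\<Sum>\<^sub>\<infinity>k. (c k)\<^sup>2) * 1"
  proof (rule mult_mono)
    show "(\<Sum>k\<in>X. (c k)\<^sup>2) \<le> (\<Sum>\<^sub>\<infinity>k. (c k)\<^sup>2)"
      using c X unfolding l2coeff_def by (intro finite_sum_le_infsum) auto
    show "(\<Sum>k\<in>X. (psi lam k x)\<^sup>2) \<le> 1" by (rule psi_sq_le1[OF sum1 X])
    show "0 \<le> (\<Sum>\<^sub>\<infinity>k. (c k)\<^sup>2)" by (rule infsum_nonneg) simp
    show "0 \<le> (\<Sum>k\<in>X. (psi lam k x)\<^sup>2)" by (rule sum_nonneg) simp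
  qed
  finally show "(\<Sum>k\<in>X. \<bar>c k * psi lam k x\<bar>)\<^sup>2 \<le> (\<Sum>\<^sub>\<infinity>k. (c k)\<^sup>2)" by simp
qed

lemma ser_abs_summable:
  fixes lam :: "nat \<Rightarrow> real" and c :: "int^'d::finite \<Rightarrow> real"
  assumes sum1: "(\<lambda>k. (lam k)\<^sup>2) sums 1" and c: "l2coeff c"
  shows "(\<lambda>k. norm (c k * psi lam k x)) summable_on UNIV"
  unfolding abs_summable_iff_bdd_above
  by (rule bdd_aboveI[of _ "sqrt (\<Sum>\<^sub>\<infinity>k. (c k)\<^sup>2)"]) (auto intro!: ser_abs_bound[OF sum1 c])

lemma ser_summable:
  fixes lam :: "nat \<Rightarrow> real" and c :: "int^'d::finite \<Rightarrow> real"
  assumes sum1: "(\<lambda>k. (lam k)\<^sup>2) sums 1" and c: "l2coeff c"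
  shows "(\<lambda>k. c k * psi lam k x) summable_on UNIV"
  using ser_abs_summable[OF sum1 c] summable_on_iff_abs_summable_on_real by blast

lemma ser_val_bound:
  fixes lam :: "nat \<Rightarrow> real" and c :: "int^'d::finite \<Rightarrow> real"
  assumes sum1: "(\<lambda>k. (lam k)\<^sup>2) sums 1" and c: "l2coeff c"
  shows "\<bar>series lam c x\<bar> \<le> sqrt (\<Sum>\<^sub>\<infinity>k. (c k)\<^sup>2)"
proof -
  have "\<bar>series lam c x\<bar> = norm (\<Sum>\<^sub>\<infinity>k. c k * psi lam k x)" by (simp add: series_def)
  also have "\<dots> \<le> (\<Sum>\<^sub>\<infinity>k. norm (c k * psi lam k x))"
    by (rule norm_infsum_bound[OF ser_abs_summable[OF sum1 c]])
  also have "\<dots> \<le> sqrt (\<Sum>\<^sub>\<infinity>k. (c k)\<^sup>2)"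
    using ser_abs_summable[OF sum1 c]
    by (intro infsum_le_finite_sums) (auto simp: ser_abs_bound[OF sum1 c])
  finally show ?thesis .
qed

lemma ser_meas:
  fixes lam :: "nat \<Rightarrow> real" and c :: "int^'d::finite \<Rightarrow> real"
  assumes sum1: "(\<lambda>k. (lam k)\<^sup>2) sums 1" and c: "l2coeff c"
  shows "series lam c \<in> borel_measurable Tmeas"
proof (rule borel_measurable_LIMSEQ_real)
  fix x :: "real^'d"
  have "((\<lambda>X. \<Sum>k\<in>X. c k * psi lam k x) \<longlongrightarrow> series lam c x) (finite_subsets_at_top UNIV)"
    using has_sum_infsum[OF ser_summable[OF sum1 c]] unfolding has_sum_def series_def .
  from filterlim_compose[OF this Fbox_lim]
  show "(\<lambda>N. fser lam (Fbox N) c x) \<longlonglongrightarrow> series lam c x" by (simp add: fser_def)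
next
  fix N show "fser lam (Fbox N) c \<in> borel_measurable Tmeas" by (rule cont_meas_T[OF fser_cont])
qed

lemma Hball_bound:
  fixes lam :: "nat \<Rightarrow> real" and f :: "real^'d::finite \<Rightarrow> real"
  assumes sum1: "(\<lambda>k. (lam k)\<^sup>2) sums 1" and f: "f \<in> Hball lam"
  shows "\<bar>f x\<bar> \<le> 1" "f \<in> borel_measurable Tmeas"
proof -
  obtain c where c: "l2coeff c" and fc: "f = series lam c" using f unfolding Hball_def Hspace_def by blast
  show "f \<in> borel_measurable Tmeas" using ser_meas[OF sum1 c] fc by simp
  let ?S = "{sqrt (\<Sum>\<^sub>\<infinity>k. (c' k)\<^sup>2) | c'. l2coeff c' \<and> f = series lam c'}"
  have ne: "?S \<noteq> {}" using c fc by blast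
  have "\<bar>f x\<bar> \<le> Inf ?S"
  proof (rule cInf_greatest[OF ne])
    fix y assume "y \<in> ?S"
    then have "\<exists>d. l2coeff d \<and> f = series lam d \<and> y = sqrt (\<Sum>\<^sub>\<infinity>k. (d k)\<^sup>2)" by blast
    then show "\<bar>f x\<bar> \<le> y" using ser_val_bound[OF sum1] by blast
  qed
  also have "Inf ?S = Hnorm lam f" unfolding Hnorm_def by simp
  also have "\<dots> \<le> 1" using f unfolding Hball_def by simp
  finally show "\<bar>f x\<bar> \<le> 1" .
qed

lemma init_le1:
  fixes lam :: "nat \<Rightarrow> real"
  assumes sum1: "(\<lambda>k. (lam k)\<^sup>2) sums 1"
  shows "initial_error TYPE('d::finite) lam \<le> 1"
  unfolding initial_error_def
proof (rule SUP_least)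
  fix f :: "real^'d \<Rightarrow> real" assume f: "f \<in> Hball lam"
  note fm[measurable] = Hball_bound(2)[OF sum1 f]
  show "Linf_norm f \<le> 1" unfolding Linf_norm_def
    by (rule esssup_I) (auto simp: Hball_bound(1)[OF sum1 f])
qed


lemma lam_sq_le1:
  fixes lam :: "nat \<Rightarrow> real"
  assumes sum1: "(\<lambda>k. (lam k)\<^sup>2) sums 1"
  shows "(lam k)\<^sup>2 \<le> 1"
proof -
  have "(lam k)\<^sup>2 \<le> (\<Sum>i\<le>k. (lam i)\<^sup>2)" by (rule member_le_sum) auto
  also have "\<dots> \<le> 1" by (rule partial_le1[OF sum1])
  finally show ?thesis .
qed

lemma beta_facts:
  fixes lam :: "nat \<Rightarrow> real"
  assumes pos: "\<And>k. lam k > 0" and lam1: "lam 0 < 1" and sum1: "(\<lambda>k. (lam k)\<^sup>2) sums 1"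
  shows "0 < beta lam" "beta lam < 1" "(lam 0)\<^sup>2 \<le> beta lam" "\<And>k. k \<ge> 1 \<Longrightarrow> (lam k)\<^sup>2 / 2 \<le> beta lam"
proof -
  let ?S = "insert ((lam 0)\<^sup>2) {(lam k)\<^sup>2 / 2 | k. k \<ge> 1}"
  have bdd: "bdd_above ?S"
  proof (rule bdd_aboveI[of _ 1])
    fix y assume "y \<in> ?S"
    then have "y = (lam 0)\<^sup>2 \<or> (\<exists>k. y = (lam k)\<^sup>2 / 2)" by blast
    then show "y \<le> 1"
    proof
      assume "y = (lam 0)\<^sup>2" then show ?thesis using lam_sq_le1[OF sum1, of 0] by simp
    next
      assume "\<exists>k. y = (lam k)\<^sup>2 / 2"
      then obtain k where "y = (lam k)\<^sup>2 / 2" by blast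
      then show ?thesis using lam_sq_le1[OF sum1, of k] by simp
    qed
  qed
  show l0: "(lam 0)\<^sup>2 \<le> beta lam" unfolding beta_def by (rule cSup_upper[OF _ bdd]) simp
  show "(lam k)\<^sup>2 / 2 \<le> beta lam" if k: "k \<ge> 1" for k
  proof -
    have "(lam k)\<^sup>2 / 2 \<in> ?S" using k by blast
    then have "(lam k)\<^sup>2 / 2 \<le> Sup ?S" by (rule cSup_upper[OF _ bdd])
    then show ?thesis by (simp add: beta_def)
  qed
  have "0 < (lam 0)\<^sup>2" using pos[of 0] by simp
  then show "0 < beta lam" using l0 by linarith
  have l01: "(lam 0)\<^sup>2 < 1" using pos[of 0] lam1 by (simp add: power_less_one_iff abs_less_iff)
  have "beta lam \<le> max ((lam 0)\<^sup>2) (1/2)" unfolding beta_def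
  proof (rule cSup_least)
    fix y assume "y \<in> ?S"
    then have "y = (lam 0)\<^sup>2 \<or> (\<exists>k. y = (lam k)\<^sup>2 / 2)" by blast
    then show "y \<le> max ((lam 0)\<^sup>2) (1/2)"
    proof
      assume "y = (lam 0)\<^sup>2" then show ?thesis by simp
    next
      assume "\<exists>k. y = (lam k)\<^sup>2 / 2"
      then obtain k where "y = (lam k)\<^sup>2 / 2" by blast
      then show ?thesis using lam_sq_le1[OF sum1, of k] by simp
    qed
  qed simp
  then show "beta lam < 1" using l01 by simp
qed

lemma W_le_beta:
  fixes lam :: "nat \<Rightarrow> real"
  assumes pos: "\<And>k. lam k > 0" and lam1: "lam 0 < 1" and sum1: "(\<lambda>k. (lam k)\<^sup>2) sums 1"
  shows "W lam (k::int^'d::finite) \<le> beta lam ^ CARD('d)"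
proof -
  have w: "0 \<le> w1 lam p \<and> w1 lam p \<le> beta lam" for p
  proof (cases "p = 0")
    case True then show ?thesis using beta_facts(3)[OF pos lam1 sum1] by (simp add: w1_def)
  next
    case False
    then have "nat \<bar>p\<bar> \<ge> 1" by simp
    then show ?thesis using beta_facts(4)[OF pos lam1 sum1] False by (simp add: w1_def)
  qed
  have "W lam k \<le> (\<Prod>j\<in>(UNIV::'d set). beta lam)" unfolding W_def by (rule prod_mono) (use w in auto)
  then show ?thesis by simp
qed

lemma Tmeas_pos: "emeasure (Tmeas :: (real^'d::finite) measure) (space Tmeas) > 0"
proof -
  let ?B = "cbox (0::real^'d) (0 + (1/2) *\<^sub>R One)"
  have Bt: "?B \<subseteq> torus"
  proof
    fix x assume "x \<in> ?B"
    then have "\<forall>i. (0::real^'d) $ i \<le> x $ i \<and> x $ i \<le> (0 + (1/2) *\<^sub>R One) $ i" by (simp only: mem_box_cart simp_thms)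
    moreover have e: "(0 + (1/2) *\<^sub>R One) $ i = (1/2::real)" for i :: 'd
      using box_comp[of "0::real^'d" "1/2" i] by simp
    ultimately have h: "0 \<le> x $ i \<and> x $ i \<le> 1/2" for i by (metis zero_index)
    have "0 \<le> x $ i \<and> x $ i < 1" for i using h[of i] by linarith
    then show "x \<in> torus" unfolding torus_def by simp
  qed
  have "0 < emeasure lebesgue ?B" by (simp add: emeasure_lborel_cbox_eq inner_add_left prod_pos)
  also have "\<dots> = emeasure Tmeas ?B" using emeasure_Tmeas[OF Bt] by simp
  also have "\<dots> \<le> emeasure Tmeas (space (Tmeas :: (real^'d) measure))" by (rule emeasure_mono) (use Bt sets.top[of "Tmeas :: (real^'d) measure"] in \<open>auto simp: space_Tmeas\<close>)
  finally show ?thesis .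
qed

lemma Linf_nonneg: "0 \<le> Linf_norm (g :: real^'d::finite \<Rightarrow> real)"
  unfolding Linf_norm_def
proof (rule dense_le)
  fix z :: ereal assume "z < 0"
  then have "{x \<in> space Tmeas. z < ereal \<bar>g x\<bar>} = space (Tmeas :: (real^'d) measure)"
    by (auto intro: less_le_trans[of _ 0])
  then show "z \<le> esssup Tmeas (\<lambda>x. ereal \<bar>g x\<bar>)" using Tmeas_pos by (intro esssup_ge) simp
qed

lemma ereal_ge_from_reals:
  assumes a: "a > 0" and h: "\<And>t. 0 \<le> t \<Longrightarrow> t < a \<Longrightarrow> ereal t \<le> z"
  shows "ereal a \<le> z"
proof (rule dense_le)
  fix y assume y: "y < ereal a"
  show "y \<le> z"
  proof (cases y)
    case (real r)
    show ?thesis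
    proof (cases "r \<le> 0")
      case True
      then have "y \<le> ereal 0" using real by simp
      also have "\<dots> \<le> z" using h a by simp
      finally show ?thesis .
    next
      case False then show ?thesis using h y real by simp
    qed
  qed (use y in auto)
qed

lemma zero_Hball: "(\<lambda>x. 0) \<in> Hball lam"
  using fser_Hball[of "{}" "\<lambda>_. 0" lam] by (simp add: fser_def)

lemma method_lb:
  fixes lam :: "nat \<Rightarrow> real" and L :: "nat \<Rightarrow> (real^'d::finite \<Rightarrow> real) \<Rightarrow> real"
  assumes sum1: "(\<lambda>k. (lam k)\<^sup>2) sums 1"
    and Wb: "\<And>k::int^'d. W lam k \<le> b ^ CARD('d)" and b: "b \<ge> 0"
    and adm: "admissible lam n L phi"
  shows "ereal (sqrt (max 0 (1 - real n * b ^ CARD('d)))) \<le> method_error lam n L phi"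
proof -
  have clfs: "\<forall>i<n. clf lam (L i)" using adm unfolding admissible_def by blast
  define \<phi> where "\<phi> = phi (replicate n 0)"
  have phi: "\<phi> \<in> borel_measurable Tmeas" using adm unfolding admissible_def \<phi>_def by simp
  have me: "Linf_norm (\<lambda>x. f x - phi (map (\<lambda>i. L i f) [0..<n]) x) \<le> method_error lam n L phi"
    if "f \<in> Hball lam" for f unfolding method_error_def by (rule SUP_upper[OF that])
  have ge0: "0 \<le> method_error lam n L phi" using me[OF zero_Hball] Linf_nonneg order_trans by blast
  show ?thesis
  proof (cases "1 - real n * b ^ CARD('d) > 0")
    case False then show ?thesis using ge0 by (simp add: max_def zero_ereal_def)
  next
    case True
    have "ereal (sqrt (1 - real n * b ^ CARD('d))) \<le> method_error lam n L phi"
    proof (rule ereal_ge_from_reals)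
      show "sqrt (1 - real n * b ^ CARD('d)) > 0" using True by simp
      fix t assume t0: "0 \<le> t" and tl: "t < sqrt (1 - real n * b ^ CARD('d))"
      have "t\<^sup>2 < (sqrt (1 - real n * b ^ CARD('d)))\<^sup>2" using t0 tl by (intro power_strict_mono) auto
      then have t2: "t\<^sup>2 < 1 - real n * b ^ CARD('d)" using True by simp
      obtain f where f: "f \<in> Hball lam" and Lf: "\<forall>i<n. L i f = 0"
        and ft: "ereal t \<le> Linf_norm (\<lambda>x. f x - \<phi> x)"
        using core[OF sum1 Wb b clfs phi t0 t2] by blast
      have "map (\<lambda>i. L i f) [0..<n] = replicate n 0"
        using Lf by (intro nth_equalityI) auto
      then have "Linf_norm (\<lambda>x. f x - \<phi> x) \<le> method_error lam n L phi"
        using me[OF f] unfolding \<phi>_def by simp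
      then show "ereal t \<le> method_error lam n L phi" using ft by simp
    qed
    then show ?thesis using True by simp
  qed
qed

lemma det_bounds_general:
  fixes lam :: "nat \<Rightarrow> real"
  assumes sum1: "(\<lambda>k. (lam k)\<^sup>2) sums 1"
    and Wb: "\<And>k::int^'d::finite. W lam k \<le> b ^ CARD('d)" and b: "b > 0"
  shows "det_lower_bounds TYPE('d) lam b"
proof -
  have mlb: "ereal (sqrt (max 0 (1 - real n * b ^ CARD('d)))) \<le> method_error lam n L phi"
    if "admissible lam n (L :: nat \<Rightarrow> (real^'d \<Rightarrow> real) \<Rightarrow> real) phi" for n L phi
    using method_lb[OF sum1 Wb _ that] b by simp
  have init_ge: "1 \<le> initial_error TYPE('d) lam"
  proof -
    have "ereal 1 \<le> initial_error TYPE('d) lam"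
    proof (rule ereal_ge_from_reals)
      fix t :: real assume t0: "0 \<le> t" and t1: "t < 1"
      have t2: "t\<^sup>2 < 1 - real 0 * b ^ CARD('d)" using t0 t1 by (simp add: power_less_one_iff)
      have c0: "(\<lambda>x::real^'d. 0::real) \<in> borel_measurable Tmeas" by simp
      have b0: "b \<ge> 0" using b by simp
      have cl0: "\<forall>i<(0::nat). clf lam ((\<lambda>_ (_::real^'d \<Rightarrow> real). 0::real) i)" by simp
      note core[where L="\<lambda>_ _. 0" and \<phi>="\<lambda>x. 0" and n=0, OF sum1 Wb b0 cl0 c0 t0 t2]
      then obtain f :: "real^'d \<Rightarrow> real" where f: "f \<in> Hball lam"
        and ft: "ereal t \<le> Linf_norm (\<lambda>x. f x - 0)" by auto
      have "Linf_norm f \<le> initial_error TYPE('d) lam" unfolding initial_error_def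
        by (rule SUP_upper[OF f])
      then show "ereal t \<le> initial_error TYPE('d) lam" using ft by simp
    qed simp
    then show ?thesis by (simp add: one_ereal_def)
  qed
  have init: "initial_error TYPE('d) lam = 1"
    using init_ge init_le1[OF sum1, where 'd='d] by simp
  have edet: "ereal (sqrt (max 0 (1 - real n * b ^ CARD('d)))) \<le> e_det TYPE('d) lam n" for n
    unfolding e_det_def by (rule INF_greatest) (auto intro!: mlb)
  have ndet: "ereal (inverse (b ^ CARD('d)) * (1 - eps)\<^sup>2) \<le> ereal_of_enat (n_det TYPE('d) lam eps)"
    if eps: "0 < eps" "eps < 1" for eps
  proof -
    define S where "S = {n. \<exists>(L :: nat \<Rightarrow> (real^'d \<Rightarrow> real) \<Rightarrow> real) phi.
                 admissible lam n L phi \<and> method_error lam n L phi \<le> ereal eps}"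
    have nd: "n_det TYPE('d) lam eps = (INF n\<in>S. enat n)" unfolding n_det_def S_def by simp
    show ?thesis
    proof (cases "S = {}")
      case True then show ?thesis unfolding nd by (simp add: top_enat_def)
    next
      case False
      define n0 where "n0 = Inf S"
      have n0S: "n0 \<in> S" unfolding n0_def using False by (rule Inf_nat_def1)
      have "(INF n\<in>S. enat n) = enat n0"
      proof (rule antisym)
        show "(INF n\<in>S. enat n) \<le> enat n0" by (rule INF_lower[OF n0S])
        show "enat n0 \<le> (INF n\<in>S. enat n)" unfolding n0_def by (rule INF_greatest) (simp add: cInf_lower)
      qed
      then have nd0: "n_det TYPE('d) lam eps = enat n0" using nd by simp
      obtain L :: "nat \<Rightarrow> (real^'d \<Rightarrow> real) \<Rightarrow> real" and phi where adm: "admissible lam n0 L phi"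
        and le: "method_error lam n0 L phi \<le> ereal eps" using n0S unfolding S_def by blast
      have "ereal (sqrt (max 0 (1 - real n0 * b ^ CARD('d)))) \<le> ereal eps" using order_trans[OF mlb[OF adm] le] .
      then have "sqrt (max 0 (1 - real n0 * b ^ CARD('d))) \<le> eps" by simp
      then have "max 0 (1 - real n0 * b ^ CARD('d)) \<le> eps\<^sup>2"
        using eps by (metis real_sqrt_le_iff real_sqrt_pow2_iff real_sqrt_power max.cobounded1 power2_eq_square order_trans zero_le_power2 real_le_rsqrt real_sqrt_le_mono abs_of_nonneg real_sqrt_abs)
      then have h: "1 - eps\<^sup>2 \<le> real n0 * b ^ CARD('d)" by simp
      have "(1 - eps)\<^sup>2 \<le> 1 - eps\<^sup>2" using eps by (simp add: power2_eq_square algebra_simps)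
      then have "(1 - eps)\<^sup>2 \<le> real n0 * b ^ CARD('d)" using h by simp
      then have "inverse (b ^ CARD('d)) * (1 - eps)\<^sup>2 \<le> real n0"
        using b by (simp add: field_simps)
      then show ?thesis unfolding nd0 by simp
    qed
  qed
  show ?thesis unfolding det_lower_bounds_def using init edet ndet by blast
qed

lemma main_general:
  fixes lam :: "nat \<Rightarrow> real"
  assumes pos: "\<And>k. lam k > 0" and lam1: "lam 0 < 1" and sum1: "(\<lambda>k. (lam k)\<^sup>2) sums 1"
  shows "0 < beta lam \<and> beta lam < 1 \<and> det_lower_bounds TYPE('d::finite) lam (beta lam)"
  using beta_facts[OF pos lam1 sum1] det_bounds_general[OF sum1 W_le_beta[OF pos lam1 sum1]] by blast


lemma kor_facts:
  fixes r b0 b1 :: real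
  assumes r: "r > 1/2" and b0: "b0 > 0" and b1: "b1 > 0"
    and eq: "b0 + b1 * (\<Sum>k. 1 / real (Suc k) powr (2 * r)) = 1"
  shows "\<And>k. kor_lambda r b0 b1 k > 0" "kor_lambda r b0 b1 0 < 1"
    "(\<lambda>k. (kor_lambda r b0 b1 k)\<^sup>2) sums 1"
    "beta (kor_lambda r b0 b1) = max b0 (b1 / 2)"
proof -
  let ?g = "\<lambda>k. 1 / real (Suc k) powr (2 * r)"
  let ?\<kappa> = "kor_lambda r b0 b1"
  have "summable (\<lambda>n. real n powr (- (2 * r)))" using r by (simp add: summable_real_powr_iff)
  then have "summable (\<lambda>n. real (Suc n) powr (- (2 * r)))" by (subst summable_Suc_iff)
  then have sg: "summable ?g" by (simp add: powr_minus_divide)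
  have gpos: "0 < ?g k" for k by simp
  have Zpos: "0 < suminf ?g" using suminf_pos[OF sg gpos] by simp
  have sq: "(?\<kappa> k)\<^sup>2 = b1 * real k powr (- (2 * r))" if "k \<ge> 1" for k
  proof -
    have "(?\<kappa> k)\<^sup>2 = b1 * (real k powr (- r))\<^sup>2"
      using that b1 by (simp add: kor_lambda_def power_mult_distrib)
    also have "(real k powr (- r))\<^sup>2 = real k powr (- (2 * r))"
      using that by (simp add: power2_eq_square powr_add[symmetric])
    finally show ?thesis .
  qed
  show "?\<kappa> k > 0" for k using b0 b1 by (simp add: kor_lambda_def)
  have "b1 * suminf ?g > 0" using b1 Zpos by simp
  then have "b0 < 1" using eq by linarith
  then show "?\<kappa> 0 < 1" using b0 by (simp add: kor_lambda_def)
  have "(\<lambda>k. (?\<kappa> (Suc k))\<^sup>2) = (\<lambda>k. b1 * ?g k)"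
    by (rule ext) (simp add: sq powr_minus_divide)
  moreover have "(\<lambda>k. b1 * ?g k) sums (b1 * suminf ?g)" by (rule sums_mult[OF summable_sums[OF sg]])
  ultimately have "(\<lambda>k. (?\<kappa> (Suc k))\<^sup>2) sums (b1 * suminf ?g)" by simp
  then have "(\<lambda>k. (?\<kappa> k)\<^sup>2) sums (b1 * suminf ?g + (?\<kappa> 0)\<^sup>2)" by (rule sums_Suc)
  moreover have "(?\<kappa> 0)\<^sup>2 = b0" using b0 by (simp add: kor_lambda_def)
  ultimately show "(\<lambda>k. (?\<kappa> k)\<^sup>2) sums 1" using eq by (simp add: add.commute)
  let ?S = "insert ((?\<kappa> 0)\<^sup>2) {(?\<kappa> k)\<^sup>2 / 2 | k. k \<ge> 1}"
  have le: "y \<le> max b0 (b1 / 2)" if "y \<in> ?S" for y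
  proof -
    have "y = (?\<kappa> 0)\<^sup>2 \<or> (\<exists>k. k \<ge> 1 \<and> y = (?\<kappa> k)\<^sup>2 / 2)" using that by blast
    then show ?thesis
    proof
      assume "y = (?\<kappa> 0)\<^sup>2" then show ?thesis using b0 by (simp add: kor_lambda_def)
    next
      assume "\<exists>k. k \<ge> 1 \<and> y = (?\<kappa> k)\<^sup>2 / 2"
      then obtain k where k: "k \<ge> 1" "y = (?\<kappa> k)\<^sup>2 / 2" by blast
      have "real k powr (- (2 * r)) \<le> real k powr 0" using k r by (intro powr_mono) auto
      then have "real k powr (- (2 * r)) \<le> 1" using k by simp
      then have "b1 * real k powr (- (2 * r)) \<le> b1" using b1 by (simp add: mult_le_cancel_left1)
      then show ?thesis using k sq[OF k(1)] by simp
    qed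
  qed
  have bdd: "bdd_above ?S" using le by (intro bdd_aboveI) blast
  have "b0 \<in> ?S" using b0 by (simp add: kor_lambda_def)
  then have u0: "b0 \<le> Sup ?S" by (rule cSup_upper[OF _ bdd])
  have "(?\<kappa> 1)\<^sup>2 / 2 \<in> ?S" by blast
  moreover have "(?\<kappa> 1)\<^sup>2 / 2 = b1 / 2" using sq[of 1] by simp
  ultimately have "b1 / 2 \<in> ?S" by simp
  then have u1: "b1 / 2 \<le> Sup ?S" by (rule cSup_upper[OF _ bdd])
  have "Sup ?S \<le> max b0 (b1 / 2)" by (rule cSup_least) (use le in auto)
  then have "Sup ?S = max b0 (b1 / 2)" using u0 u1 by simp
  then show "beta ?\<kappa> = max b0 (b1 / 2)" by (simp add: beta_def)
qed

theorem theorem3p1: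
  fixes lam :: "nat \<Rightarrow> real"
  assumes pos: "\<And>k. lam k > 0"
    and lam0: "0 \<le> lam 0" "lam 0 < 1"
    and sum1: "(\<lambda>k. (lam k)\<^sup>2) sums 1"
  shows "0 < beta lam \<and> beta lam < 1 \<and> det_lower_bounds TYPE('d::finite) lam (beta lam) \<and>
         (\<forall>r b0 b1. r > 1/2 \<and> b0 > 0 \<and> b1 > 0 \<and>
           b0 + b1 * (\<Sum>k. 1 / real (Suc k) powr (2 * r)) = 1 \<longrightarrow>
           beta (kor_lambda r b0 b1) = max b0 (b1 / 2) \<and>
           det_lower_bounds TYPE('d::finite) (kor_lambda r b0 b1) (max b0 (b1 / 2)))"
proof -
  have A: "0 < beta lam \<and> beta lam < 1 \<and> det_lower_bounds TYPE('d) lam (beta lam)"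
    by (rule main_general[OF pos lam0(2) sum1])
  have B: "beta (kor_lambda r b0 b1) = max b0 (b1 / 2) \<and>
           det_lower_bounds TYPE('d) (kor_lambda r b0 b1) (max b0 (b1 / 2))"
    if h: "r > 1/2 \<and> b0 > 0 \<and> b1 > 0 \<and> b0 + b1 * (\<Sum>k. 1 / real (Suc k) powr (2 * r)) = 1"
    for r b0 b1 :: real
  proof -
    have r: "r > 1/2" and b0: "b0 > 0" and b1: "b1 > 0"
      and eq: "b0 + b1 * (\<Sum>k. 1 / real (Suc k) powr (2 * r)) = 1" using h by auto
    note kf = kor_facts[OF r b0 b1 eq]
    have "det_lower_bounds TYPE('d) (kor_lambda r b0 b1) (beta (kor_lambda r b0 b1))"
      using main_general[OF kf(1) kf(2) kf(3)] by blast
    then show ?thesis using kf(4) by simp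
  qed
  show ?thesis using A B by blast
qed


end
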